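(* Fix an outer iteration $k$ of SREDA and the inner procedure described in the context. Let $g(y)=-f(x_{k+1},y)$ and $\hat u_{k,t}=-\tilde u_{k,t}$. Then for any $t\ge1$, $$\mathbb{E}\|\nabla g(\tilde y_{k,t})-\hat u_{k,t}\|^2=\mathbb{E}\|\nabla g(\tilde y_{k,0})-\hat u_{k,0}\|^2-\sum_{j=1}^t\mathbb{E}\|\nabla g(\tilde y_{k,j})-\nabla g(\tilde y_{k,j-1})\|^2+\sum_{j=1}^t\mathbb{E}\|\hat u_{k,j}-\hat u_{k,j-1}\|^2.$$
   Context: Problem: $f(x,y)=\mathbb{E}[F(x,y;\xi)]$ on $\mathbb{R}^{d_1}\times\mathbb{R}^{d_2}$ with (A2) $\mathbb{E}\|\nabla F(x,y;\xi)-\nabla F(x',y';\xi)\|^2\le\ell^2(\|x-x'\|^2+\|y-y'\|^2)$, (A3) $F(x,\cdot;\xi)$ concave for each $\xi,x$, (A4) $f(x,\cdot)$ $\mu$-strongly concave, and also $\max_yf(\cdot,y)$ bounded below and $\mathbb{E}\|\nabla F-\nabla f\|^2\le\sigma^2$. $G_x=\nabla_xF$, $G_y=\nabla_yF$; samples are i.i.d. copies of $\xi$ independent of everything else. Inner procedure at outer iteration $k$ (step size $\lambda>0$, batch size $S_2$, integer $m$): given $x_k,y_k$, estimates $v_k,u_k$ and $x_{k+1}$, set $\tilde x_{k,-1}=x_k,\tilde y_{k,-1}=y_k,\tilde v_{k,-1}=v_k,\tilde u_{k,-1}=u_k,\tilde x_{k,0}=x_{k+1},\tilde y_{k,0}=y_k$;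 for $t=0,\dots,m+1$ draw $S_2$ fresh samples $\xi_{t,i}$ and set $\tilde v_{k,t}=\tilde v_{k,t-1}+\frac1{S_2}\sum_i[G_x(\tilde x_{k,t},\tilde y_{k,t};\xi_{t,i})-G_x(\tilde x_{k,t-1},\tilde y_{k,t-1};\xi_{t,i})]$, $\tilde u_{k,t}=\tilde u_{k,t-1}+\frac1{S_2}\sum_i[G_y(\tilde x_{k,t},\tilde y_{k,t};\xi_{t,i})-G_y(\tilde x_{k,t-1},\tilde y_{k,t-1};\xi_{t,i})]$, $\tilde x_{k,t+1}=\tilde x_{k,t}$, $\tilde y_{k,t+1}=\tilde y_{k,t}+\lambda\tilde u_{k,t}$. *)

theory Defs
  imports "HOL-Probability.Probability"
begin

definition pop_obj :: "'xi measure \<Rightarrow> ('a \<Rightarrow> 'b \<Rightarrow> 'xi \<Rightarrow> real) \<Rightarrow> 'a \<Rightarrow> 'b \<Rightarrow> real" where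
  "pop_obj D F x y = (\<integral>\<xi>. F x y \<xi> \<partial>D)"

text \<open>The state index n corresponds to t = n - 1, i.e. n = 0 is t = -1.
  The state is (x~_t, y~_t, v~_t, u~_t).  The samples used at inner step t are
  xs t i, i < S2.\<close>
primrec sreda_inner_state ::
  "('a::real_vector \<Rightarrow> 'b::real_vector \<Rightarrow> 'xi \<Rightarrow> 'a) \<Rightarrow> ('a \<Rightarrow> 'b \<Rightarrow> 'xi \<Rightarrow> 'b) \<Rightarrow> real \<Rightarrow> nat
   \<Rightarrow> (nat \<Rightarrow> nat \<Rightarrow> 'xi) \<Rightarrow> 'a \<Rightarrow> 'b \<Rightarrow> 'a \<Rightarrow> 'b \<Rightarrow> 'a \<Rightarrow> nat \<Rightarrow> 'a \<times> 'b \<times> 'a \<times> 'b" where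
  "sreda_inner_state Gx Gy lam S2 xs xk yk vk uk xk1 0 = (xk, yk, vk, uk)"
| "sreda_inner_state Gx Gy lam S2 xs xk yk vk uk xk1 (Suc n) =
     (let (xp, yp, vp, up) = sreda_inner_state Gx Gy lam S2 xs xk yk vk uk xk1 n;
          xn = (if n = 0 then xk1 else xp);
          yn = (if n = 0 then yk else yp + lam *\<^sub>R up);
          vn = vp + (1 / real S2) *\<^sub>R (\<Sum>i<S2. Gx xn yn (xs n i) - Gx xp yp (xs n i));
          un = up + (1 / real S2) *\<^sub>R (\<Sum>i<S2. Gy xn yn (xs n i) - Gy xp yp (xs n i))
      in (xn, yn, vn, un))"

definition sreda_y where
  "sreda_y Gx Gy lam S2 xs xk yk vk uk xk1 t =
     fst (snd (sreda_inner_state Gx Gy lam S2 xs xk yk vk uk xk1 (Suc t)))"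

definition sreda_u where
  "sreda_u Gx Gy lam S2 xs xk yk vk uk xk1 t =
     snd (snd (snd (sreda_inner_state Gx Gy lam S2 xs xk yk vk uk xk1 (Suc t))))"

end

theory Submission
  imports Defs
begin

lemma sq_sum_le: "((x::real) + y)^2 \<le> 2*x^2 + 2*y^2"
  using zero_le_power2[of "x - y"] by (simp add: power2_eq_square algebra_simps)
lemma le_1_sq: "0 \<le> (n::real) \<Longrightarrow> n \<le> 1 + n^2"
proof (cases "n \<le> 1")
  case True then show ?thesis by (simp add: add_increasing2)
next
  case False then have "n * 1 \<le> n * n" by (intro mult_left_mono) auto
  then show ?thesis by (simp add: power2_eq_square)
qed
lemma prod_le_sq: "(x::real) * y \<le> x^2 + y^2"
proof -
  have "0 \<le> (x - y)^2" by simp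
  then have "2 * (x * y) \<le> x^2 + y^2" by (simp add: power2_eq_square algebra_simps)
  moreover have "0 \<le> x^2 + y^2" by simp
  ultimately show ?thesis by linarith
qed
lemma borel_fst: "fst \<in> borel_measurable (borel :: ('a::second_countable_topology \<times> 'b::second_countable_topology) measure)"
  by (subst borel_prod[symmetric]) (rule measurable_fst)
lemma borel_snd: "snd \<in> borel_measurable (borel :: ('a::second_countable_topology \<times> 'b::second_countable_topology) measure)"
  by (subst borel_prod[symmetric]) (rule measurable_snd)
lemma borel_meas_fst: "f \<in> borel_measurable M \<Longrightarrow> (\<lambda>\<omega>. fst (f \<omega>) :: 'a::second_countable_topology) \<in> borel_measurable M"
  for f :: "_ \<Rightarrow> _ \<times> 'b::second_countable_topology"
  using measurable_compose[OF _ borel_fst] by blast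
lemma borel_meas_snd: "f \<in> borel_measurable M \<Longrightarrow> (\<lambda>\<omega>. snd (f \<omega>) :: 'b::second_countable_topology) \<in> borel_measurable M"
  for f :: "_ \<Rightarrow> 'a::second_countable_topology \<times> _"
  using measurable_compose[OF _ borel_snd] by blast

lemma dir_deriv:
  fixes g :: "'b::real_normed_vector \<Rightarrow> real"
  assumes g: "(g has_derivative g') (at y)"
  shows "((\<lambda>\<tau>. (g (y + \<tau> *\<^sub>R v) - g y) / \<tau>) \<longlongrightarrow> g' v) (at 0)"
proof -
  have lin: "linear g'" using g has_derivative_linear by blast
  have d1: "((\<lambda>\<tau>::real. y + \<tau> *\<^sub>R v) has_derivative (\<lambda>\<tau>. \<tau> *\<^sub>R v)) (at 0)"
    by (auto intro!: derivative_eq_intros)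
  have g0: "(g has_derivative g') (at (y + 0 *\<^sub>R v))" using g by simp
  have "((\<lambda>\<tau>::real. g (y + \<tau> *\<^sub>R v)) has_derivative (\<lambda>\<tau>. g' (\<tau> *\<^sub>R v))) (at 0)"
    using has_derivative_compose[OF d1 g0] by (simp add: o_def)
  moreover have "(\<lambda>\<tau>. g' (\<tau> *\<^sub>R v)) = (*) (g' v)"
    using lin by (auto simp: linear_scale fun_eq_iff)
  ultimately have "((\<lambda>\<tau>::real. g (y + \<tau> *\<^sub>R v)) has_field_derivative g' v) (at 0)"
    by (simp add: has_field_derivative_def)
  then show ?thesis by (simp add: has_field_derivative_iff)
qed

lemma concave_tangent:
  fixes g :: "'b::real_normed_vector \<Rightarrow> real"
  assumes c: "concave_on UNIV g" and g: "(g has_derivative g') (at y)"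
  shows "g z \<le> g y + g' (z - y)"
proof -
  have lim: "((\<lambda>\<tau>. (g (y + \<tau> *\<^sub>R (z - y)) - g y) / \<tau>) \<longlongrightarrow> g' (z - y)) (at_right 0)"
    using dir_deriv[OF g] by (rule filterlim_mono) (simp_all add: at_within_le_at)
  have ev: "eventually (\<lambda>\<tau>. g z - g y \<le> (g (y + \<tau> *\<^sub>R (z - y)) - g y) / \<tau>) (at_right 0)"
    using eventually_at_right_real[of "0::real" 1, OF zero_less_one]
  proof eventually_elim
    case (elim \<tau>)
    then have t: "0 < \<tau>" "\<tau> < 1" by auto
    have "- g ((1 - \<tau>) *\<^sub>R y + \<tau> *\<^sub>R z) \<le> (1 - \<tau>) * (- g y) + \<tau> * (- g z)"
      using convex_onD[OF c[unfolded concave_on_def], of \<tau> y z] t by simp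
    moreover have "(1 - \<tau>) *\<^sub>R y + \<tau> *\<^sub>R z = y + \<tau> *\<^sub>R (z - y)"
      by (simp add: algebra_simps)
    ultimately have "\<tau> * (g z - g y) \<le> g (y + \<tau> *\<^sub>R (z - y)) - g y"
      by (simp add: algebra_simps)
    then show ?case using t by (simp add: pos_le_divide_eq mult.commute)
  qed
  have "g z - g y \<le> g' (z - y)"
    by (rule tendsto_lowerbound[OF lim ev]) simp
  then show ?thesis by simp
qed


lemma partial_deriv2:
  assumes "((\<lambda>(x', y'). \<phi> x' y') has_derivative (\<lambda>(h1, h2). a \<bullet> h1 + b \<bullet> h2)) (at (x, y))"
  shows "((\<lambda>y'. \<phi> x y') has_derivative (\<lambda>h. b \<bullet> h)) (at y)"
proof -
  have d1: "((\<lambda>y'. (x, y')) has_derivative (\<lambda>h. (0, h))) (at y)"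
    by (auto intro!: derivative_eq_intros)
  from has_derivative_compose[OF d1 assms] show ?thesis by (simp add: o_def)
qed

lemma nn_L2_L1:
  fixes f :: "'s \<Rightarrow> 'v::real_normed_vector"
  assumes D: "prob_space D" and fm: "f \<in> borel_measurable D"
    and b: "(\<integral>\<^sup>+s. ennreal (norm (f s)^2) \<partial>D) \<le> ennreal (c^2)" and c: "0 \<le> c"
  shows "(\<integral>\<^sup>+s. ennreal (norm (f s)) \<partial>D) \<le> ennreal c"
proof -
  interpret prob_space D by (rule D)
  have "(\<integral>\<^sup>+s. ennreal (norm (f s)) * 1 \<partial>D)\<^sup>2 \<le> (\<integral>\<^sup>+s. ennreal (norm (f s)) ^ 2 \<partial>D) * (\<integral>\<^sup>+s. 1 ^ 2 \<partial>D)"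
    by (rule Cauchy_Schwarz_nn_integral) (use fm in auto)
  also have "(\<integral>\<^sup>+s. ennreal (norm (f s)) ^ 2 \<partial>D) = (\<integral>\<^sup>+s. ennreal (norm (f s)^2) \<partial>D)"
    by (simp add: ennreal_power)
  also have "(\<integral>\<^sup>+s. 1 ^ 2 \<partial>D) = 1" by (simp add: emeasure_space_1)
  finally have le: "(\<integral>\<^sup>+s. ennreal (norm (f s)) \<partial>D)\<^sup>2 \<le> ennreal (c^2)" using b by simp
  show ?thesis
  proof (cases "(\<integral>\<^sup>+s. ennreal (norm (f s)) \<partial>D)" rule: ennreal_cases)
    case (real r)
    with le have "ennreal (r^2) \<le> ennreal (c^2)" by (simp add: ennreal_power)
    then have "r^2 \<le> c^2" using c by (auto simp add: ennreal_le_iff2)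
    then have "r \<le> c" using c real(2) by (meson abs_le_square_iff abs_of_nonneg power2_le_imp_le)
    then show ?thesis using real by simp
  next
    case top
    with le show ?thesis by (simp add: top_unique)
  qed
qed


locale sreda_ctx =
  fixes F :: "'a::euclidean_space \<Rightarrow> 'b::euclidean_space \<Rightarrow> 'xi \<Rightarrow> real"
    and Gx :: "'a \<Rightarrow> 'b \<Rightarrow> 'xi \<Rightarrow> 'a" and Gy :: "'a \<Rightarrow> 'b \<Rightarrow> 'xi \<Rightarrow> 'b"
    and gfx :: "'a \<Rightarrow> 'b \<Rightarrow> 'a" and gfy :: "'a \<Rightarrow> 'b \<Rightarrow> 'b"
    and D :: "'xi measure" and L \<sigma> :: real
  assumes D_prob: "prob_space D"
    and F_int: "\<And>x y. integrable D (F x y)"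
    and F_grad: "\<And>x y s. ((\<lambda>(x', y'). F x' y' s) has_derivative
                   (\<lambda>(h1, h2). Gx x y s \<bullet> h1 + Gy x y s \<bullet> h2)) (at (x, y))"
    and Gy_meas: "(\<lambda>(z, s). Gy (fst z) (snd z) s) \<in> borel_measurable (borel \<Otimes>\<^sub>M D)"
    and f_grad: "\<And>x y. ((\<lambda>(x', y'). pop_obj D F x' y') has_derivative
                   (\<lambda>(h1, h2). gfx x y \<bullet> h1 + gfy x y \<bullet> h2)) (at (x, y))"
    and A2: "\<And>x y x' y'. (\<integral>\<^sup>+ s. ennreal (norm (Gx x y s - Gx x' y' s)^2 + norm (Gy x y s - Gy x' y' s)^2) \<partial>D)
                 \<le> ennreal (L^2 * (norm (x - x')^2 + norm (y - y')^2))"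
    and A3: "\<And>x s. concave_on UNIV (\<lambda>y. F x y s)"
    and var: "\<And>x y. (\<integral>\<^sup>+ s. ennreal (norm (Gx x y s - gfx x y)^2 + norm (Gy x y s - gfy x y)^2) \<partial>D)
                 \<le> ennreal (\<sigma>^2)"
begin

lemma Gy_meas_comp:
  assumes "X \<in> borel_measurable N" "Y \<in> borel_measurable N" "Z \<in> measurable N D"
  shows "(\<lambda>\<omega>. Gy (X \<omega>) (Y \<omega>) (Z \<omega>)) \<in> borel_measurable N"
proof -
  have "(\<lambda>\<omega>. ((X \<omega>, Y \<omega>), Z \<omega>)) \<in> measurable N (borel \<Otimes>\<^sub>M D)"
    using assms by (intro measurable_Pair borel_measurable_Pair) auto
  from measurable_compose[OF this Gy_meas] show ?thesis by simp
qed

lemma Gy_pt_meas[measurable]: "(\<lambda>s. Gy x y s) \<in> borel_measurable D"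
  using Gy_meas_comp[of "\<lambda>_. x" D "\<lambda>_. y" "\<lambda>s. s"] by simp

lemma var_y: "(\<integral>\<^sup>+ s. ennreal (norm (Gy x y s - gfy x y)^2) \<partial>D) \<le> ennreal (\<bar>\<sigma>\<bar>^2)"
proof -
  have "(\<integral>\<^sup>+ s. ennreal (norm (Gy x y s - gfy x y)^2) \<partial>D)
     \<le> (\<integral>\<^sup>+ s. ennreal (norm (Gx x y s - gfx x y)^2 + norm (Gy x y s - gfy x y)^2) \<partial>D)"
    by (intro nn_integral_mono ennreal_leI) simp
  also have "\<dots> \<le> ennreal (\<sigma>^2)" by (rule var)
  finally show ?thesis by simp
qed

lemma A2_y: "(\<integral>\<^sup>+ s. ennreal (norm (Gy x y s - Gy x' y' s)^2) \<partial>D)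
    \<le> ennreal (L^2 * (norm (x - x')^2 + norm (y - y')^2))"
proof -
  have "(\<integral>\<^sup>+ s. ennreal (norm (Gy x y s - Gy x' y' s)^2) \<partial>D)
     \<le> (\<integral>\<^sup>+ s. ennreal (norm (Gx x y s - Gx x' y' s)^2 + norm (Gy x y s - Gy x' y' s)^2) \<partial>D)"
    by (intro nn_integral_mono ennreal_leI) simp
  also have "\<dots> \<le> ennreal (L^2 * (norm (x - x')^2 + norm (y - y')^2))" by (rule A2)
  finally show ?thesis .
qed

lemma var_y_L1: "(\<integral>\<^sup>+ s. ennreal (norm (Gy x y s - gfy x y)) \<partial>D) \<le> ennreal \<bar>\<sigma>\<bar>"
  by (rule nn_L2_L1[OF D_prob _ var_y]) (auto intro: Gy_pt_meas)

lemma A2_y_L1: "(\<integral>\<^sup>+ s. ennreal (norm (Gy x y s - Gy x' y' s)) \<partial>D)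
    \<le> ennreal (\<bar>L\<bar> * sqrt (norm (x - x')^2 + norm (y - y')^2))"
proof (rule nn_L2_L1[OF D_prob])
  show "(\<lambda>s. Gy x y s - Gy x' y' s) \<in> borel_measurable D" by measurable
  have "(\<bar>L\<bar> * sqrt (norm (x - x')^2 + norm (y - y')^2))^2 = L^2 * (norm (x - x')^2 + norm (y - y')^2)"
    by (simp add: power_mult_distrib)
  then show "(\<integral>\<^sup>+ s. ennreal (norm (Gy x y s - Gy x' y' s)^2) \<partial>D)
    \<le> ennreal ((\<bar>L\<bar> * sqrt (norm (x - x')^2 + norm (y - y')^2))^2)"
    using A2_y by simp
qed simp

lemma Gy_int: "integrable D (Gy x y)"
proof -
  interpret prob_space D by (rule D_prob)
  have "integrable D (\<lambda>s. Gy x y s - gfy x y)"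
    unfolding integrable_iff_bounded using Gy_pt_meas var_y_L1[of x y]
    by (auto simp: le_less_trans[OF _ ennreal_less_top])
  moreover have "integrable D (\<lambda>s. gfy x y)" by simp
  ultimately have "integrable D (\<lambda>s. (Gy x y s - gfy x y) + gfy x y)" by (rule Bochner_Integration.integrable_add)
  then show ?thesis by simp
qed

end

context sreda_ctx begin

lemma Gy_mean: "(\<integral>s. Gy x y s \<partial>D) = gfy x y"
proof -
  interpret D: prob_space D by (rule D_prob)
  define h where "h = (\<integral>s. Gy x y s \<partial>D)"
  define f where "f = (\<lambda>y'. pop_obj D F x y')"
  have key: "gfy x y \<bullet> d = h \<bullet> d" for d
  proof -
    define Q where "Q = (\<lambda>\<tau>. (f (y + \<tau> *\<^sub>R d) - f y) / \<tau>)"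
    have fd: "(f has_derivative (\<lambda>h. gfy x y \<bullet> h)) (at y)"
      unfolding f_def using partial_deriv2[OF f_grad] .
    have lim1: "(Q \<longlongrightarrow> gfy x y \<bullet> d) (at_right 0)"
      unfolding Q_def using dir_deriv[OF fd] by (rule filterlim_mono) (simp_all add: at_within_le_at)
    have bound: "\<bar>Q \<tau> - h \<bullet> d\<bar> \<le> \<bar>L\<bar> * \<tau> * (norm d)^2" if \<tau>: "0 < \<tau>" for \<tau>
    proof -
      have Fd: "((\<lambda>y'. F x y' s) has_derivative (\<lambda>h. Gy x z s \<bullet> h)) (at z)" for z s
        using partial_deriv2[OF F_grad] .
      have pw: "norm (F x (y + \<tau> *\<^sub>R d) s - F x y s - \<tau> * (Gy x y s \<bullet> d))
          \<le> \<tau> * norm d * norm (Gy x (y + \<tau> *\<^sub>R d) s - Gy x y s)" for s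
      proof -
        have Fd1: "((\<lambda>y'. F x y' s) has_derivative (\<lambda>h. Gy x y s \<bullet> h)) (at y)"
          using partial_deriv2[OF F_grad] .
        have Fd2: "((\<lambda>y'. F x y' s) has_derivative (\<lambda>h. Gy x (y + \<tau> *\<^sub>R d) s \<bullet> h)) (at (y + \<tau> *\<^sub>R d))"
          using partial_deriv2[OF F_grad] .
        have u: "F x (y + \<tau> *\<^sub>R d) s \<le> F x y s + Gy x y s \<bullet> (\<tau> *\<^sub>R d)"
          using concave_tangent[OF A3[of x s] Fd1, of "y + \<tau> *\<^sub>R d"] by simp
        have l: "F x y s \<le> F x (y + \<tau> *\<^sub>R d) s + Gy x (y + \<tau> *\<^sub>R d) s \<bullet> (y - (y + \<tau> *\<^sub>R d))"
          using concave_tangent[OF A3[of x s] Fd2, of y] by simp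
        have cs: "- (norm d * norm (Gy x (y + \<tau> *\<^sub>R d) s - Gy x y s)) \<le> (Gy x (y + \<tau> *\<^sub>R d) s - Gy x y s) \<bullet> d"
          using norm_cauchy_schwarz[of "- (Gy x (y + \<tau> *\<^sub>R d) s - Gy x y s)" d]
          by (simp add: mult.commute norm_minus_commute inner_diff_left)
        have cs2: "- (\<tau> * (norm d * norm (Gy x (y + \<tau> *\<^sub>R d) s - Gy x y s))) \<le> \<tau> * ((Gy x (y + \<tau> *\<^sub>R d) s - Gy x y s) \<bullet> d)"
          using mult_left_mono[OF cs, of \<tau>] \<tau> by simp
        have "F x (y + \<tau> *\<^sub>R d) s - F x y s - \<tau> * (Gy x y s \<bullet> d) \<le> 0"
          using u by (simp add: inner_scaleR_right)
        moreover have "F x (y + \<tau> *\<^sub>R d) s - F x y s - \<tau> * (Gy x y s \<bullet> d) \<ge> \<tau> * ((Gy x (y + \<tau> *\<^sub>R d) s - Gy x y s) \<bullet> d)"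
          using l by (simp add: inner_diff_left inner_diff_right algebra_simps)
        ultimately show ?thesis using cs2 by (simp add: abs_le_iff mult.assoc)
      qed
      have eq: "f (y + \<tau> *\<^sub>R d) - f y - \<tau> * (h \<bullet> d)
          = (\<integral>s. (F x (y + \<tau> *\<^sub>R d) s - F x y s - \<tau> * (Gy x y s \<bullet> d)) \<partial>D)"
        unfolding f_def h_def pop_obj_def using F_int Gy_int by simp
      have int: "integrable D (\<lambda>s. F x (y + \<tau> *\<^sub>R d) s - F x y s - \<tau> * (Gy x y s \<bullet> d))"
        using F_int Gy_int by auto
      have "ennreal (norm (f (y + \<tau> *\<^sub>R d) - f y - \<tau> * (h \<bullet> d)))
          \<le> (\<integral>\<^sup>+s. norm (F x (y + \<tau> *\<^sub>R d) s - F x y s - \<tau> * (Gy x y s \<bullet> d)) \<partial>D)"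
        unfolding eq by (rule integral_norm_bound_ennreal[OF int])
      also have "\<dots> \<le> (\<integral>\<^sup>+s. ennreal (\<tau> * norm d) * ennreal (norm (Gy x (y + \<tau> *\<^sub>R d) s - Gy x y s)) \<partial>D)"
        using \<tau> pw by (intro nn_integral_mono) (simp add: ennreal_mult'[symmetric])
      also have "\<dots> = ennreal (\<tau> * norm d) * (\<integral>\<^sup>+s. ennreal (norm (Gy x (y + \<tau> *\<^sub>R d) s - Gy x y s)) \<partial>D)"
        by (rule nn_integral_cmult) measurable
      also have "\<dots> \<le> ennreal (\<tau> * norm d) * ennreal (\<bar>L\<bar> * sqrt (norm (x - x)^2 + norm (y + \<tau> *\<^sub>R d - y)^2))"
        by (intro mult_left_mono A2_y_L1) simp
      also have "\<dots> = ennreal (\<bar>L\<bar> * \<tau> * (norm d)^2 * \<tau>)"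
        using \<tau> by (simp add: ennreal_mult'[symmetric] power2_eq_square)
      finally have "norm (f (y + \<tau> *\<^sub>R d) - f y - \<tau> * (h \<bullet> d)) \<le> \<bar>L\<bar> * \<tau> * (norm d)^2 * \<tau>"
        using \<tau> by (subst (asm) ennreal_le_iff) auto
      moreover have "Q \<tau> - h \<bullet> d = (f (y + \<tau> *\<^sub>R d) - f y - \<tau> * (h \<bullet> d)) / \<tau>"
        unfolding Q_def using \<tau> by (simp add: field_simps)
      ultimately show ?thesis using \<tau> by (simp add: divide_le_eq)
    qed
    have lim2: "((\<lambda>\<tau>. \<bar>Q \<tau> - h \<bullet> d\<bar>) \<longlongrightarrow> \<bar>gfy x y \<bullet> d - h \<bullet> d\<bar>) (at_right 0)"
      by (intro tendsto_intros lim1)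
    have "((\<lambda>\<tau>. \<bar>L\<bar> * \<tau> * (norm d)^2) \<longlongrightarrow> \<bar>L\<bar> * 0 * (norm d)^2) (at_right (0::real))"
      by (intro tendsto_intros)
    then have lim3: "((\<lambda>\<tau>. \<bar>L\<bar> * \<tau> * (norm d)^2) \<longlongrightarrow> 0) (at_right (0::real))" by simp
    have ev: "eventually (\<lambda>\<tau>. \<bar>Q \<tau> - h \<bullet> d\<bar> \<le> \<bar>L\<bar> * \<tau> * (norm d)^2) (at_right 0)"
      using eventually_at_right_real[of "0::real" 1, OF zero_less_one]
      by eventually_elim (auto intro: bound)
    have "\<bar>gfy x y \<bullet> d - h \<bullet> d\<bar> \<le> 0"
      by (rule tendsto_le[OF _ lim3 lim2 ev]) simp
    then show ?thesis by simp
  qed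
  from key[of "gfy x y - h"] have "(gfy x y - h) \<bullet> (gfy x y - h) = 0"
    by (simp add: inner_diff_left)
  then show ?thesis unfolding h_def by simp
qed

end

context prob_space begin

lemma indep_distr_pair:
  fixes W :: "'a \<Rightarrow> 'c::topological_space" and D :: "'d measure" and Z :: "'a \<Rightarrow> 'd"
  assumes Dp: "prob_space D" and rvW: "W \<in> borel_measurable M" and rvZ: "Z \<in> measurable M D"
    and indp: "\<And>A B. A \<in> sets borel \<Longrightarrow> B \<in> sets D \<Longrightarrow>
       prob ((W -` A \<inter> space M) \<inter> (Z -` B \<inter> space M)) = prob (W -` A \<inter> space M) * prob (Z -` B \<inter> space M)"
    and dZ: "distr M D Z = D"
  shows "distr M borel W \<Otimes>\<^sub>M D = distr M (borel \<Otimes>\<^sub>M D) (\<lambda>\<omega>. (W \<omega>, Z \<omega>))"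
proof -
  have XY: "(\<lambda>x. (W x, Z x)) \<in> measurable M (borel \<Otimes>\<^sub>M D)"
    using rvW rvZ by (rule measurable_Pair)
  interpret X: prob_space "distr M borel W" by (rule prob_space_distr) (rule rvW)
  interpret Dp: prob_space D by (rule Dp)
  interpret XY: pair_prob_space "distr M borel W" D ..
  show ?thesis
  proof (rule pair_measure_eqI)
    show "sigma_finite_measure (distr M borel W)" ..
    show "sigma_finite_measure D" ..
    fix A B assume A: "A \<in> sets (distr M borel W)" and B: "B \<in> sets D"
    have "emeasure (distr M (borel \<Otimes>\<^sub>M D) (\<lambda>\<omega>. (W \<omega>, Z \<omega>))) (A \<times> B)
        = emeasure M ((\<lambda>x. (W x, Z x)) -` (A \<times> B) \<inter> space M)"
      using A B by (intro emeasure_distr[OF XY]) auto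
    also have "(\<lambda>x. (W x, Z x)) -` (A \<times> B) \<inter> space M = (W -` A \<inter> space M) \<inter> (Z -` B \<inter> space M)"
      by auto
    also have "emeasure M ((W -` A \<inter> space M) \<inter> (Z -` B \<inter> space M))
        = emeasure M (W -` A \<inter> space M) * emeasure M (Z -` B \<inter> space M)"
      using indp[of A B] A B
      by (simp add: emeasure_eq_measure measure_nonneg ennreal_mult)
    also have "\<dots> = emeasure (distr M borel W) A * emeasure D B"
      using rvW rvZ A B dZ by (metis emeasure_distr sets_distr)
    finally show "emeasure (distr M borel W) A * emeasure D B = emeasure (distr M (borel \<Otimes>\<^sub>M D) (\<lambda>\<omega>. (W \<omega>, Z \<omega>))) (A \<times> B)" by simp
  qed simp
qed

lemma indep_nn:
  fixes W :: "'a \<Rightarrow> 'c::topological_space" and D :: "'d measure" and Z :: "'a \<Rightarrow> 'd"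
  assumes Dp: "prob_space D" and rvW: "W \<in> borel_measurable M" and rvZ: "Z \<in> measurable M D"
    and indp: "\<And>A B. A \<in> sets borel \<Longrightarrow> B \<in> sets D \<Longrightarrow>
       prob ((W -` A \<inter> space M) \<inter> (Z -` B \<inter> space M)) = prob (W -` A \<inter> space M) * prob (Z -` B \<inter> space M)"
    and dZ: "distr M D Z = D"
    and g: "g \<in> borel_measurable (borel \<Otimes>\<^sub>M D)"
  shows "(\<integral>\<^sup>+\<omega>. g (W \<omega>, Z \<omega>) \<partial>M) = (\<integral>\<^sup>+\<omega>. (\<integral>\<^sup>+s. g (W \<omega>, s) \<partial>D) \<partial>M)"
proof -
  have rv: "random_variable borel W" "random_variable D Z"
    using rvW rvZ by auto
  have eq: "distr M borel W \<Otimes>\<^sub>M D = distr M (borel \<Otimes>\<^sub>M D) (\<lambda>\<omega>. (W \<omega>, Z \<omega>))"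
    by (rule indep_distr_pair[OF Dp rvW rvZ indp dZ])
  interpret W: prob_space "distr M borel W" by (rule prob_space_distr) (rule rv)
  interpret Dp: prob_space D by (rule Dp)
  interpret P: pair_prob_space "distr M borel W" D ..
  have gm: "g \<in> borel_measurable (distr M borel W \<Otimes>\<^sub>M D)"
    using g by (simp cong: measurable_cong_sets)
  have "(\<integral>\<^sup>+\<omega>. g (W \<omega>, Z \<omega>) \<partial>M) = (\<integral>\<^sup>+p. g p \<partial>distr M (borel \<Otimes>\<^sub>M D) (\<lambda>\<omega>. (W \<omega>, Z \<omega>)))"
    using rv g by (subst nn_integral_distr) (auto intro: measurable_Pair)
  also have "\<dots> = (\<integral>\<^sup>+p. g p \<partial>(distr M borel W \<Otimes>\<^sub>M D))" by (simp add: eq)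
  also have "\<dots> = (\<integral>\<^sup>+w. (\<integral>\<^sup>+s. g (w, s) \<partial>D) \<partial>distr M borel W)"
    by (rule Dp.nn_integral_fst[symmetric]) (rule gm)
  also have "\<dots> = (\<integral>\<^sup>+\<omega>. (\<integral>\<^sup>+s. g (W \<omega>, s) \<partial>D) \<partial>M)"
    using rv Dp.borel_measurable_nn_integral_fst[OF g] by (subst nn_integral_distr) auto
  finally show ?thesis .
qed

lemma indep_int:
  fixes W :: "'a \<Rightarrow> 'c::topological_space" and D :: "'d measure" and Z :: "'a \<Rightarrow> 'd" and g :: "'c \<times> 'd \<Rightarrow> real"
  assumes Dp: "prob_space D" and rvW: "W \<in> borel_measurable M" and rvZ: "Z \<in> measurable M D"
    and indp: "\<And>A B. A \<in> sets borel \<Longrightarrow> B \<in> sets D \<Longrightarrow>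
       prob ((W -` A \<inter> space M) \<inter> (Z -` B \<inter> space M)) = prob (W -` A \<inter> space M) * prob (Z -` B \<inter> space M)"
    and dZ: "distr M D Z = D"
    and g: "g \<in> borel_measurable (borel \<Otimes>\<^sub>M D)"
    and fin: "(\<integral>\<^sup>+\<omega>. (\<integral>\<^sup>+s. ennreal (norm (g (W \<omega>, s))) \<partial>D) \<partial>M) < \<infinity>"
  shows "integrable M (\<lambda>\<omega>. g (W \<omega>, Z \<omega>))"
    and "(\<integral>\<omega>. g (W \<omega>, Z \<omega>) \<partial>M) = (\<integral>\<omega>. (\<integral>s. g (W \<omega>, s) \<partial>D) \<partial>M)"
proof -
  have rv: "random_variable borel W" "random_variable D Z"
    using rvW rvZ by auto
  have eq: "distr M borel W \<Otimes>\<^sub>M D = distr M (borel \<Otimes>\<^sub>M D) (\<lambda>\<omega>. (W \<omega>, Z \<omega>))"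
    by (rule indep_distr_pair[OF Dp rvW rvZ indp dZ])
  interpret W: prob_space "distr M borel W" by (rule prob_space_distr) (rule rv)
  interpret Dp: prob_space D by (rule Dp)
  interpret P: pair_prob_space "distr M borel W" D ..
  have gm: "g \<in> borel_measurable (distr M borel W \<Otimes>\<^sub>M D)"
    using g by (simp cong: measurable_cong_sets)
  have ng: "(\<lambda>p. ennreal (norm (g p))) \<in> borel_measurable (borel \<Otimes>\<^sub>M D)" using g by measurable
  have "(\<integral>\<^sup>+p. ennreal (norm (g p)) \<partial>(distr M borel W \<Otimes>\<^sub>M D))
      = (\<integral>\<^sup>+w. (\<integral>\<^sup>+s. ennreal (norm (g (w, s))) \<partial>D) \<partial>distr M borel W)"
    by (rule Dp.nn_integral_fst[symmetric]) (use ng in \<open>simp cong: measurable_cong_sets\<close>)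
  also have "\<dots> = (\<integral>\<^sup>+\<omega>. (\<integral>\<^sup>+s. ennreal (norm (g (W \<omega>, s))) \<partial>D) \<partial>M)"
    using rv Dp.borel_measurable_nn_integral_fst[OF ng] by (subst nn_integral_distr) auto
  finally have intP: "integrable (distr M borel W \<Otimes>\<^sub>M D) g"
    using fin gm by (simp add: integrable_iff_bounded)
  then have intJ: "integrable (distr M (borel \<Otimes>\<^sub>M D) (\<lambda>\<omega>. (W \<omega>, Z \<omega>))) g" by (simp add: eq)
  have pm: "(\<lambda>\<omega>. (W \<omega>, Z \<omega>)) \<in> measurable M (borel \<Otimes>\<^sub>M D)"
    using rv by (auto intro: measurable_Pair)
  show "integrable M (\<lambda>\<omega>. g (W \<omega>, Z \<omega>))"
    using intJ integrable_distr_eq[OF pm g] by simp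
  have "(\<integral>\<omega>. g (W \<omega>, Z \<omega>) \<partial>M) = (\<integral>p. g p \<partial>distr M (borel \<Otimes>\<^sub>M D) (\<lambda>\<omega>. (W \<omega>, Z \<omega>)))"
    by (rule integral_distr[OF pm g, symmetric])
  also have "\<dots> = (\<integral>p. g p \<partial>(distr M borel W \<Otimes>\<^sub>M D))" by (simp add: eq)
  also have "\<dots> = (\<integral>w. (\<integral>s. g (w, s) \<partial>D) \<partial>distr M borel W)"
    by (rule P.integral_fst'[symmetric]) (rule intP)
  also have "\<dots> = (\<integral>\<omega>. (\<integral>s. g (W \<omega>, s) \<partial>D) \<partial>M)"
  proof (rule integral_distr)
    show "W \<in> measurable M borel" using rv by simp
    show "(\<lambda>w. \<integral>s. g (w, s) \<partial>D) \<in> borel_measurable borel"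
      using Dp.borel_measurable_lebesgue_integral[of "\<lambda>w s. g (w, s)" borel] g by simp
  qed
  finally show "(\<integral>\<omega>. g (W \<omega>, Z \<omega>) \<partial>M) = (\<integral>\<omega>. (\<integral>s. g (W \<omega>, s) \<partial>D) \<partial>M)" .
qed

end

definition L2 :: "'a measure \<Rightarrow> ('a \<Rightarrow> 'v::{real_normed_vector, second_countable_topology}) \<Rightarrow> bool" where
  "L2 M f \<longleftrightarrow> f \<in> borel_measurable M \<and> integrable M (\<lambda>\<omega>. (norm (f \<omega>))^2)"

lemma norm_fst_le': "norm (fst p) \<le> norm p" by (metis norm_fst_le prod.collapse)
lemma norm_snd_le': "norm (snd p) \<le> norm p" by (metis norm_snd_le prod.collapse)

context finite_measure begin

lemma L2_meas: "L2 M f \<Longrightarrow> f \<in> borel_measurable M" by (simp add: L2_def)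
lemma L2_sq: "L2 M f \<Longrightarrow> integrable M (\<lambda>\<omega>. (norm (f \<omega>))^2)" by (simp add: L2_def)

lemma L2_bound:
  fixes f :: "'a \<Rightarrow> 'v::{real_normed_vector, second_countable_topology}"
    and g :: "'a \<Rightarrow> 'u::{real_normed_vector, second_countable_topology}"
  assumes f: "L2 M f" and g: "g \<in> borel_measurable M"
    and b: "\<And>\<omega>. \<omega> \<in> space M \<Longrightarrow> norm (g \<omega>) \<le> a + c * norm (f \<omega>)"
  shows "L2 M g"
proof -
  have i: "integrable M (\<lambda>\<omega>. 2 * a^2 + 2 * c^2 * (norm (f \<omega>))^2)"
    using f unfolding L2_def by (intro Bochner_Integration.integrable_add integrable_mult_right) auto
  have "integrable M (\<lambda>\<omega>. (norm (g \<omega>))^2)"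
  proof (rule Bochner_Integration.integrable_bound[OF i])
    have [measurable]: "g \<in> borel_measurable M" by (rule g)
    show "(\<lambda>\<omega>. (norm (g \<omega>))^2) \<in> borel_measurable M" by measurable
    show "AE \<omega> in M. norm ((norm (g \<omega>))^2) \<le> norm (2 * a^2 + 2 * c^2 * (norm (f \<omega>))^2)"
    proof (rule AE_I2)
      fix \<omega> assume w: "\<omega> \<in> space M"
      have 0: "0 \<le> norm (g \<omega>)" by simp
      have "(norm (g \<omega>))^2 \<le> (a + c * norm (f \<omega>))^2"
        using b[OF w] 0 by (intro power_mono) auto
      also have "\<dots> \<le> 2 * a^2 + 2 * c^2 * (norm (f \<omega>))^2"
        using sum_squares_bound[of a "c * norm (f \<omega>)"]
        by (simp add: power2_eq_square algebra_simps)
      finally show "norm ((norm (g \<omega>))^2) \<le> norm (2 * a^2 + 2 * c^2 * (norm (f \<omega>))^2)"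
        by simp
    qed
  qed
  then show ?thesis using g by (simp add: L2_def)
qed

lemma L2_add:
  fixes f g :: "'a \<Rightarrow> 'v::{real_normed_vector, second_countable_topology}"
  assumes f: "L2 M f" and g: "L2 M g"
  shows "L2 M (\<lambda>\<omega>. f \<omega> + g \<omega>)"
proof -
  have i: "integrable M (\<lambda>\<omega>. 2 * (norm (f \<omega>))^2 + 2 * (norm (g \<omega>))^2)"
    using f g unfolding L2_def by (intro Bochner_Integration.integrable_add integrable_mult_right) auto
  have [measurable]: "f \<in> borel_measurable M" "g \<in> borel_measurable M" using f g by (simp_all add: L2_def)
  have m: "(\<lambda>\<omega>. f \<omega> + g \<omega>) \<in> borel_measurable M" by measurable
  have "integrable M (\<lambda>\<omega>. (norm (f \<omega> + g \<omega>))^2)"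
  proof (rule Bochner_Integration.integrable_bound[OF i])
    show "(\<lambda>\<omega>. (norm (f \<omega> + g \<omega>))^2) \<in> borel_measurable M" using m by measurable
    show "AE \<omega> in M. norm ((norm (f \<omega> + g \<omega>))^2) \<le> norm (2 * (norm (f \<omega>))^2 + 2 * (norm (g \<omega>))^2)"
    proof (rule AE_I2)
      fix \<omega>
      have "(norm (f \<omega> + g \<omega>))^2 \<le> (norm (f \<omega>) + norm (g \<omega>))^2"
        by (intro power_mono norm_triangle_ineq) simp
      also have "\<dots> \<le> 2 * (norm (f \<omega>))^2 + 2 * (norm (g \<omega>))^2"
        by (rule sq_sum_le)
      finally show "norm ((norm (f \<omega> + g \<omega>))^2) \<le> norm (2 * (norm (f \<omega>))^2 + 2 * (norm (g \<omega>))^2)"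
        by simp
    qed
  qed
  then show ?thesis using m by (simp add: L2_def)
qed

lemma L2_scaleR:
  fixes f :: "'a \<Rightarrow> 'v::{real_normed_vector, second_countable_topology}"
  assumes f: "L2 M f" shows "L2 M (\<lambda>\<omega>. c *\<^sub>R f \<omega>)"
  by (rule L2_bound[OF f, where a=0 and c="\<bar>c\<bar>"]) (use f in \<open>auto simp: L2_def\<close>)

lemma L2_minus:
  fixes f :: "'a \<Rightarrow> 'v::{real_normed_vector, second_countable_topology}"
  assumes f: "L2 M f" shows "L2 M (\<lambda>\<omega>. - f \<omega>)"
  by (rule L2_bound[OF f, where a=0 and c=1]) (use f in \<open>auto simp: L2_def\<close>)

lemma L2_diff:
  fixes f g :: "'a \<Rightarrow> 'v::{real_normed_vector, second_countable_topology}"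
  assumes f: "L2 M f" and g: "L2 M g"
  shows "L2 M (\<lambda>\<omega>. f \<omega> - g \<omega>)"
  using L2_add[OF f L2_minus[OF g]] by simp

lemma L2_const: "L2 M (\<lambda>\<omega>. c)"
  by (simp add: L2_def)

lemma L2_sum:
  fixes f :: "'i \<Rightarrow> 'a \<Rightarrow> 'v::{real_normed_vector, second_countable_topology}"
  assumes "finite I" "\<And>i. i \<in> I \<Longrightarrow> L2 M (f i)"
  shows "L2 M (\<lambda>\<omega>. \<Sum>i\<in>I. f i \<omega>)"
  using assms
proof (induction I rule: finite_induct)
  case empty then show ?case using L2_const[of 0] by simp
next
  case (insert i I)
  then show ?case using L2_add[of "f i" "\<lambda>\<omega>. \<Sum>i\<in>I. f i \<omega>"] by simp
qed

lemma L2_Pair: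
  fixes f :: "'a \<Rightarrow> 'v::{real_normed_vector, second_countable_topology}"
    and g :: "'a \<Rightarrow> 'u::{real_normed_vector, second_countable_topology}"
  assumes f: "L2 M f" and g: "L2 M g"
  shows "L2 M (\<lambda>\<omega>. (f \<omega>, g \<omega>))"
proof -
  have "integrable M (\<lambda>\<omega>. (norm (f \<omega>))^2 + (norm (g \<omega>))^2)"
    using f g unfolding L2_def by auto
  moreover have "(norm (f \<omega>, g \<omega>))^2 = (norm (f \<omega>))^2 + (norm (g \<omega>))^2" for \<omega>
    by (simp add: norm_Pair)
  ultimately show ?thesis using f g unfolding L2_def by (auto intro: borel_measurable_Pair)
qed

lemma L2_fst:
  fixes f :: "'a \<Rightarrow> 'v::{real_normed_vector, second_countable_topology} \<times> 'u::{real_normed_vector, second_countable_topology}"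
  assumes f: "L2 M f" shows "L2 M (\<lambda>\<omega>. fst (f \<omega>))"
  by (rule L2_bound[OF f, where a=0 and c=1]) (use f in \<open>auto simp: L2_def norm_fst_le' intro: borel_meas_fst\<close>)

lemma L2_snd:
  fixes f :: "'a \<Rightarrow> 'v::{real_normed_vector, second_countable_topology} \<times> 'u::{real_normed_vector, second_countable_topology}"
  assumes f: "L2 M f" shows "L2 M (\<lambda>\<omega>. snd (f \<omega>))"
  by (rule L2_bound[OF f, where a=0 and c=1]) (use f in \<open>auto simp: L2_def norm_snd_le' intro: borel_meas_snd\<close>)

lemma L2_int_norm:
  fixes f :: "'a \<Rightarrow> 'v::{real_normed_vector, second_countable_topology}"
  assumes f: "L2 M f" shows "integrable M (\<lambda>\<omega>. norm (f \<omega>))"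
proof (rule Bochner_Integration.integrable_bound)
  show "integrable M (\<lambda>\<omega>. 1 + (norm (f \<omega>))^2)" using f unfolding L2_def by auto
  have [measurable]: "f \<in> borel_measurable M" using f by (simp_all add: L2_def)
  show "(\<lambda>\<omega>. norm (f \<omega>)) \<in> borel_measurable M" by measurable
  show "AE \<omega> in M. norm (norm (f \<omega>)) \<le> norm (1 + (norm (f \<omega>))^2)"
    by (intro AE_I2) (simp add: le_1_sq)
qed

lemma L2_int_inner:
  fixes f g :: "'a \<Rightarrow> 'v::{real_inner, second_countable_topology}"
  assumes f: "L2 M f" and g: "L2 M g" shows "integrable M (\<lambda>\<omega>. f \<omega> \<bullet> g \<omega>)"
proof (rule Bochner_Integration.integrable_bound)
  show "integrable M (\<lambda>\<omega>. (norm (f \<omega>))^2 + (norm (g \<omega>))^2)" using f g unfolding L2_def by auto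
  have [measurable]: "f \<in> borel_measurable M" "g \<in> borel_measurable M" using f g by (simp_all add: L2_def)
  show "(\<lambda>\<omega>. f \<omega> \<bullet> g \<omega>) \<in> borel_measurable M" by measurable
  show "AE \<omega> in M. norm (f \<omega> \<bullet> g \<omega>) \<le> norm ((norm (f \<omega>))^2 + (norm (g \<omega>))^2)"
  proof (intro AE_I2)
    fix \<omega>
    have "\<bar>f \<omega> \<bullet> g \<omega>\<bar> \<le> norm (f \<omega>) * norm (g \<omega>)" by (rule Cauchy_Schwarz_ineq2)
    also have "\<dots> \<le> (norm (f \<omega>))^2 + (norm (g \<omega>))^2"
      by (rule prod_le_sq)
    finally show "norm (f \<omega> \<bullet> g \<omega>) \<le> norm ((norm (f \<omega>))^2 + (norm (g \<omega>))^2)" by simp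
  qed
qed

lemma L2_nn:
  fixes f :: "'a \<Rightarrow> 'v::{real_normed_vector, second_countable_topology}"
  assumes m: "f \<in> borel_measurable M" and b: "(\<integral>\<^sup>+\<omega>. ennreal ((norm (f \<omega>))^2) \<partial>M) < \<infinity>"
  shows "L2 M f"
  unfolding L2_def integrable_iff_bounded using m b by auto

end

context sreda_ctx begin

lemma gfy_lip: "norm (gfy x y - gfy x' y') \<le> \<bar>L\<bar> * norm ((x, y) - (x', y'))"
proof -
  interpret D: prob_space D by (rule D_prob)
  have "gfy x y - gfy x' y' = (\<integral>s. Gy x y s - Gy x' y' s \<partial>D)"
    using Gy_int Gy_mean by simp
  then have "ennreal (norm (gfy x y - gfy x' y')) \<le> (\<integral>\<^sup>+s. norm (Gy x y s - Gy x' y' s) \<partial>D)"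
    using integral_norm_bound_ennreal[of D "\<lambda>s. Gy x y s - Gy x' y' s"] Gy_int by simp
  also have "\<dots> \<le> ennreal (\<bar>L\<bar> * sqrt (norm (x - x')^2 + norm (y - y')^2))"
    by (rule A2_y_L1)
  finally show ?thesis by (auto simp add: norm_Pair ennreal_le_iff2)
qed

lemma gfy_borel: "(\<lambda>z. gfy (fst z) (snd z)) \<in> borel_measurable borel"
proof -
  interpret D: prob_space D by (rule D_prob)
  have "(\<lambda>z. \<integral>s. Gy (fst z) (snd z) s \<partial>D) \<in> borel_measurable borel"
    using D.borel_measurable_lebesgue_integral[of "\<lambda>z s. Gy (fst z) (snd z) s" borel] Gy_meas by simp
  then show ?thesis using Gy_mean by simp
qed

lemma gfy_meas_comp:
  assumes "X \<in> borel_measurable N" "Y \<in> borel_measurable N"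
  shows "(\<lambda>\<omega>. gfy (X \<omega>) (Y \<omega>)) \<in> borel_measurable N"
  using measurable_compose[OF borel_measurable_Pair[OF assms] gfy_borel] by simp

lemma gfy_L2:
  assumes M: "finite_measure M" and X: "L2 M X" and Y: "L2 M Y"
  shows "L2 M (\<lambda>\<omega>. gfy (X \<omega>) (Y \<omega>))"
proof -
  interpret finite_measure M by (rule M)
  show ?thesis
  proof (rule L2_bound[OF L2_Pair[OF X Y], where a="norm (gfy 0 0)" and c="\<bar>L\<bar>"])
    show "(\<lambda>\<omega>. gfy (X \<omega>) (Y \<omega>)) \<in> borel_measurable M"
      using X Y by (intro gfy_meas_comp) (auto simp: L2_def)
    fix \<omega>
    have "norm (gfy (X \<omega>) (Y \<omega>)) \<le> norm (gfy 0 0) + norm (gfy (X \<omega>) (Y \<omega>) - gfy 0 0)"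
      by (metis add_diff_cancel_left' norm_triangle_ineq2 add.commute diff_le_eq)
    also have "\<dots> \<le> norm (gfy 0 0) + \<bar>L\<bar> * norm ((X \<omega>, Y \<omega>) - (0, 0))"
      using gfy_lip by (intro add_left_mono) 
    finally show "norm (gfy (X \<omega>) (Y \<omega>)) \<le> norm (gfy 0 0) + \<bar>L\<bar> * norm (X \<omega>, Y \<omega>)"
      by (simp add: zero_prod_def[symmetric])
  qed
qed

end

lemma sreda_state_Suc_x:
  "fst (sreda_inner_state Gx Gy lam S2 xs xk yk vk uk x1 (Suc n)) = x1"
proof (induction n)
  case 0 then show ?case by (simp add: Let_def split_beta)
next
  case (Suc n) then show ?case by (simp add: Let_def split_beta)
qed

lemma sreda_y0: "sreda_y Gx Gy lam S2 xs xk yk vk uk x1 0 = yk"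
  by (simp add: sreda_y_def Let_def split_beta)

lemma sreda_u0: "sreda_u Gx Gy lam S2 xs xk yk vk uk x1 0 =
   uk + (1 / real S2) *\<^sub>R (\<Sum>i<S2. Gy x1 yk (xs 0 i) - Gy xk yk (xs 0 i))"
  by (simp add: sreda_u_def Let_def split_beta)

lemma sreda_ySuc: "sreda_y Gx Gy lam S2 xs xk yk vk uk x1 (Suc j) =
   sreda_y Gx Gy lam S2 xs xk yk vk uk x1 j + lam *\<^sub>R sreda_u Gx Gy lam S2 xs xk yk vk uk x1 j"
  by (simp add: sreda_y_def sreda_u_def Let_def split_beta del: sreda_inner_state.simps(2))
     (simp add: Let_def split_beta)

lemma sreda_uSuc: "sreda_u Gx Gy lam S2 xs xk yk vk uk x1 (Suc j) =
   sreda_u Gx Gy lam S2 xs xk yk vk uk x1 j + (1 / real S2) *\<^sub>R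
     (\<Sum>i<S2. Gy x1 (sreda_y Gx Gy lam S2 xs xk yk vk uk x1 (Suc j)) (xs (Suc j) i)
             - Gy x1 (sreda_y Gx Gy lam S2 xs xk yk vk uk x1 j) (xs (Suc j) i))"
proof -
  have x: "fst (sreda_inner_state Gx Gy lam S2 xs xk yk vk uk x1 (Suc j)) = x1"
    by (rule sreda_state_Suc_x)
  show ?thesis
    unfolding sreda_u_def sreda_ySuc
    apply (subst sreda_inner_state.simps(2))
    using x by (simp add: Let_def split_beta sreda_y_def sreda_u_def)
qed


definition indepZ :: "'w measure \<Rightarrow> ('w \<Rightarrow> 'c::topological_space) \<Rightarrow> ('w \<Rightarrow> 'd) \<Rightarrow> 'd measure \<Rightarrow> bool" where
  "indepZ M W Z D \<longleftrightarrow> W \<in> borel_measurable M \<and> Z \<in> measurable M D \<and> distr M D Z = D \<and>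
     (\<forall>A\<in>sets borel. \<forall>B\<in>sets D. measure M ((W -` A \<inter> space M) \<inter> (Z -` B \<inter> space M))
        = measure M (W -` A \<inter> space M) * measure M (Z -` B \<inter> space M))"

locale sreda_full = sreda_ctx F Gx Gy gfx gfy D L \<sigma> + prob_space M
  for F :: "'a::euclidean_space \<Rightarrow> 'b::euclidean_space \<Rightarrow> 'xi \<Rightarrow> real"
    and Gx :: "'a \<Rightarrow> 'b \<Rightarrow> 'xi \<Rightarrow> 'a" and Gy :: "'a \<Rightarrow> 'b \<Rightarrow> 'xi \<Rightarrow> 'b"
    and gfx :: "'a \<Rightarrow> 'b \<Rightarrow> 'a" and gfy :: "'a \<Rightarrow> 'b \<Rightarrow> 'b"
    and D :: "'xi measure" and L \<sigma> :: real and M :: "'w measure"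
begin

lemma K1:
  assumes ind: "indepZ M (\<lambda>\<omega>. (X1 \<omega>, Y1 \<omega>, X2 \<omega>, Y2 \<omega>)) Z D"
    and L2s: "L2 M X1" "L2 M Y1" "L2 M X2" "L2 M Y2"
  shows "L2 M (\<lambda>\<omega>. Gy (X1 \<omega>) (Y1 \<omega>) (Z \<omega>) - Gy (X2 \<omega>) (Y2 \<omega>) (Z \<omega>))"
proof -
  interpret Dp: prob_space D by (rule D_prob)
  define W where "W = (\<lambda>\<omega>. (X1 \<omega>, Y1 \<omega>, X2 \<omega>, Y2 \<omega>))"
  define g where "g = (\<lambda>p::('a \<times> 'b \<times> 'a \<times> 'b) \<times> 'xi. ennreal ((norm (Gy (fst (fst p)) (fst (snd (fst p))) (snd p)
        - Gy (fst (snd (snd (fst p)))) (snd (snd (snd (fst p)))) (snd p)))^2))"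
  have Wm: "W \<in> borel_measurable M" and Zm: "Z \<in> measurable M D" and dZ: "distr M D Z = D"
    and indp: "\<And>A B. A \<in> sets borel \<Longrightarrow> B \<in> sets D \<Longrightarrow>
       prob ((W -` A \<inter> space M) \<inter> (Z -` B \<inter> space M)) = prob (W -` A \<inter> space M) * prob (Z -` B \<inter> space M)"
    using ind unfolding indepZ_def W_def by auto
  have f1: "(\<lambda>p. fst p) \<in> borel_measurable (borel \<Otimes>\<^sub>M D)" by (rule measurable_fst)
  have c1: "(\<lambda>p::('a \<times> 'b \<times> 'a \<times> 'b) \<times> 'xi. fst (fst p)) \<in> borel_measurable (borel \<Otimes>\<^sub>M D)"
    and c2: "(\<lambda>p::('a \<times> 'b \<times> 'a \<times> 'b) \<times> 'xi. fst (snd (fst p))) \<in> borel_measurable (borel \<Otimes>\<^sub>M D)"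
    and c3: "(\<lambda>p::('a \<times> 'b \<times> 'a \<times> 'b) \<times> 'xi. fst (snd (snd (fst p)))) \<in> borel_measurable (borel \<Otimes>\<^sub>M D)"
    and c4: "(\<lambda>p::('a \<times> 'b \<times> 'a \<times> 'b) \<times> 'xi. snd (snd (snd (fst p)))) \<in> borel_measurable (borel \<Otimes>\<^sub>M D)"
    by (intro borel_meas_fst borel_meas_snd f1)+
  have c5: "snd \<in> measurable (borel \<Otimes>\<^sub>M D) D" by (rule measurable_snd)
  have gm: "g \<in> borel_measurable (borel \<Otimes>\<^sub>M D)"
  proof -
    have "(\<lambda>p::('a \<times> 'b \<times> 'a \<times> 'b) \<times> 'xi. Gy (fst (fst p)) (fst (snd (fst p))) (snd p)
        - Gy (fst (snd (snd (fst p)))) (snd (snd (snd (fst p)))) (snd p)) \<in> borel_measurable (borel \<Otimes>\<^sub>M D)"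
      by (intro borel_measurable_diff Gy_meas_comp c1 c2 c3 c4 c5)
    then show ?thesis unfolding g_def by measurable
  qed
  have XY: "L2 M (\<lambda>\<omega>. X1 \<omega> - X2 \<omega>)" "L2 M (\<lambda>\<omega>. Y1 \<omega> - Y2 \<omega>)"
    using L2s by (auto intro: L2_diff)
  have iL: "integrable M (\<lambda>\<omega>. L^2 * ((norm (X1 \<omega> - X2 \<omega>))^2 + (norm (Y1 \<omega> - Y2 \<omega>))^2))"
    using XY by (auto intro!: integrable_mult_right simp: L2_def)
  have "(\<integral>\<^sup>+\<omega>. g (W \<omega>, Z \<omega>) \<partial>M) = (\<integral>\<^sup>+\<omega>. (\<integral>\<^sup>+s. g (W \<omega>, s) \<partial>D) \<partial>M)"
    by (rule indep_nn[OF D_prob Wm Zm indp dZ gm])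
  also have "\<dots> \<le> (\<integral>\<^sup>+\<omega>. ennreal (L^2 * ((norm (X1 \<omega> - X2 \<omega>))^2 + (norm (Y1 \<omega> - Y2 \<omega>))^2)) \<partial>M)"
    unfolding g_def W_def by (intro nn_integral_mono) (simp add: A2_y)
  also have "\<dots> < \<infinity>"
    using iL by (simp add: nn_integral_eq_integral)
  finally have fin: "(\<integral>\<^sup>+\<omega>. g (W \<omega>, Z \<omega>) \<partial>M) < \<infinity>" .
  show ?thesis
  proof (rule L2_nn)
    show "(\<lambda>\<omega>. Gy (X1 \<omega>) (Y1 \<omega>) (Z \<omega>) - Gy (X2 \<omega>) (Y2 \<omega>) (Z \<omega>)) \<in> borel_measurable M"
      using L2s Zm by (intro borel_measurable_diff Gy_meas_comp) (auto simp: L2_def)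
    show "(\<integral>\<^sup>+\<omega>. ennreal ((norm (Gy (X1 \<omega>) (Y1 \<omega>) (Z \<omega>) - Gy (X2 \<omega>) (Y2 \<omega>) (Z \<omega>)))^2) \<partial>M) < \<infinity>"
      using fin unfolding g_def W_def by simp
  qed
qed

lemma K2:
  assumes ind: "indepZ M (\<lambda>\<omega>. (B \<omega>, X \<omega>, Y \<omega>)) Z D"
    and B: "L2 M B" and Xm: "X \<in> borel_measurable M" and Ym: "Y \<in> borel_measurable M"
  shows "integrable M (\<lambda>\<omega>. B \<omega> \<bullet> (Gy (X \<omega>) (Y \<omega>) (Z \<omega>) - gfy (X \<omega>) (Y \<omega>)))"
    and "(\<integral>\<omega>. B \<omega> \<bullet> (Gy (X \<omega>) (Y \<omega>) (Z \<omega>) - gfy (X \<omega>) (Y \<omega>)) \<partial>M) = 0"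
proof -
  interpret Dp: prob_space D by (rule D_prob)
  define W where "W = (\<lambda>\<omega>. (B \<omega>, X \<omega>, Y \<omega>))"
  define g where "g = (\<lambda>p::('b \<times> 'a \<times> 'b) \<times> 'xi. fst (fst p) \<bullet> (Gy (fst (snd (fst p))) (snd (snd (fst p))) (snd p)
        - gfy (fst (snd (fst p))) (snd (snd (fst p)))))"
  have Wm: "W \<in> borel_measurable M" and Zm: "Z \<in> measurable M D" and dZ: "distr M D Z = D"
    and indp: "\<And>A B. A \<in> sets borel \<Longrightarrow> B \<in> sets D \<Longrightarrow>
       prob ((W -` A \<inter> space M) \<inter> (Z -` B \<inter> space M)) = prob (W -` A \<inter> space M) * prob (Z -` B \<inter> space M)"
    using ind unfolding indepZ_def W_def by auto
  have f1: "(\<lambda>p. fst p) \<in> borel_measurable (borel \<Otimes>\<^sub>M D)" by (rule measurable_fst)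
  have c1: "(\<lambda>p::('b \<times> 'a \<times> 'b) \<times> 'xi. fst (fst p)) \<in> borel_measurable (borel \<Otimes>\<^sub>M D)"
    and c2: "(\<lambda>p::('b \<times> 'a \<times> 'b) \<times> 'xi. fst (snd (fst p))) \<in> borel_measurable (borel \<Otimes>\<^sub>M D)"
    and c3: "(\<lambda>p::('b \<times> 'a \<times> 'b) \<times> 'xi. snd (snd (fst p))) \<in> borel_measurable (borel \<Otimes>\<^sub>M D)"
    by (intro borel_meas_fst borel_meas_snd f1)+
  have c5: "snd \<in> measurable (borel \<Otimes>\<^sub>M D) D" by (rule measurable_snd)
  have gm: "g \<in> borel_measurable (borel \<Otimes>\<^sub>M D)"
    unfolding g_def by (intro borel_measurable_inner borel_measurable_diff Gy_meas_comp gfy_meas_comp c1 c2 c3 c5)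
  have iB: "integrable M (\<lambda>\<omega>. \<bar>\<sigma>\<bar> * norm (B \<omega>))"
    using L2_int_norm[OF B] by (rule integrable_mult_right)
  have "(\<integral>\<^sup>+\<omega>. (\<integral>\<^sup>+s. ennreal (norm (g (W \<omega>, s))) \<partial>D) \<partial>M)
      \<le> (\<integral>\<^sup>+\<omega>. ennreal (\<bar>\<sigma>\<bar> * norm (B \<omega>)) \<partial>M)"
  proof (intro nn_integral_mono)
    fix \<omega>
    have "(\<integral>\<^sup>+s. ennreal (norm (g (W \<omega>, s))) \<partial>D)
        \<le> (\<integral>\<^sup>+s. ennreal (norm (B \<omega>)) * ennreal (norm (Gy (X \<omega>) (Y \<omega>) s - gfy (X \<omega>) (Y \<omega>))) \<partial>D)"
    proof (intro nn_integral_mono)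
      fix s
      have "norm (g (W \<omega>, s)) \<le> norm (B \<omega>) * norm (Gy (X \<omega>) (Y \<omega>) s - gfy (X \<omega>) (Y \<omega>))"
        unfolding g_def W_def fst_conv snd_conv real_norm_def by (rule Cauchy_Schwarz_ineq2)
      then show "ennreal (norm (g (W \<omega>, s))) \<le> ennreal (norm (B \<omega>)) * ennreal (norm (Gy (X \<omega>) (Y \<omega>) s - gfy (X \<omega>) (Y \<omega>)))"
        by (subst ennreal_mult'[symmetric]) (auto intro: ennreal_leI)
    qed
    also have "\<dots> = ennreal (norm (B \<omega>)) * (\<integral>\<^sup>+s. ennreal (norm (Gy (X \<omega>) (Y \<omega>) s - gfy (X \<omega>) (Y \<omega>))) \<partial>D)"
      by (rule nn_integral_cmult) measurable
    also have "\<dots> \<le> ennreal (norm (B \<omega>)) * ennreal \<bar>\<sigma>\<bar>"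
      by (intro mult_left_mono var_y_L1) simp
    also have "\<dots> = ennreal (\<bar>\<sigma>\<bar> * norm (B \<omega>))" by (simp add: ennreal_mult'[symmetric] mult.commute)
    finally show "(\<integral>\<^sup>+s. ennreal (norm (g (W \<omega>, s))) \<partial>D) \<le> ennreal (\<bar>\<sigma>\<bar> * norm (B \<omega>))" .
  qed
  also have "\<dots> < \<infinity>" using iB by (simp add: nn_integral_eq_integral)
  finally have fin: "(\<integral>\<^sup>+\<omega>. (\<integral>\<^sup>+s. ennreal (norm (g (W \<omega>, s))) \<partial>D) \<partial>M) < \<infinity>" .
  note R = indep_int[OF D_prob Wm Zm indp dZ gm fin]
  have eqg: "(\<lambda>\<omega>. g (W \<omega>, Z \<omega>)) = (\<lambda>\<omega>. B \<omega> \<bullet> (Gy (X \<omega>) (Y \<omega>) (Z \<omega>) - gfy (X \<omega>) (Y \<omega>)))"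
    by (simp only: g_def W_def fst_conv snd_conv)
  show "integrable M (\<lambda>\<omega>. B \<omega> \<bullet> (Gy (X \<omega>) (Y \<omega>) (Z \<omega>) - gfy (X \<omega>) (Y \<omega>)))"
    using R(1) by (simp only: eqg)
  have inner0: "(\<integral>s. g (W \<omega>, s) \<partial>D) = 0" for \<omega>
  proof -
    have int1: "integrable D (\<lambda>s. Gy (X \<omega>) (Y \<omega>) s - gfy (X \<omega>) (Y \<omega>))"
      using Gy_int[of "X \<omega>" "Y \<omega>"] by (intro Bochner_Integration.integrable_diff) simp_all
    have "(\<integral>s. g (W \<omega>, s) \<partial>D) = (\<integral>s. B \<omega> \<bullet> (Gy (X \<omega>) (Y \<omega>) s - gfy (X \<omega>) (Y \<omega>)) \<partial>D)"
      unfolding g_def W_def fst_conv snd_conv ..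
    also have "\<dots> = B \<omega> \<bullet> (\<integral>s. Gy (X \<omega>) (Y \<omega>) s - gfy (X \<omega>) (Y \<omega>) \<partial>D)"
      by (rule integral_inner_right) (rule int1)
    also have "(\<integral>s. Gy (X \<omega>) (Y \<omega>) s - gfy (X \<omega>) (Y \<omega>) \<partial>D) = 0"
    proof -
      have "(\<integral>s. Gy (X \<omega>) (Y \<omega>) s - gfy (X \<omega>) (Y \<omega>) \<partial>D)
          = (\<integral>s. Gy (X \<omega>) (Y \<omega>) s \<partial>D) - (\<integral>s. gfy (X \<omega>) (Y \<omega>) \<partial>D)"
        using Gy_int[of "X \<omega>" "Y \<omega>"] by (intro Bochner_Integration.integral_diff) simp_all
      also have "\<dots> = 0" using Gy_mean[of "X \<omega>" "Y \<omega>"] by (simp add: Dp.prob_space)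
      finally show ?thesis .
    qed
    finally show ?thesis by (simp only: inner_zero_right)
  qed
  have "(\<integral>\<omega>. g (W \<omega>, Z \<omega>) \<partial>M) = (\<integral>\<omega>. (\<integral>s. g (W \<omega>, s) \<partial>D) \<partial>M)"
    by (rule R(2))
  also have "\<dots> = (\<integral>\<omega>. 0 \<partial>M)" by (simp only: inner0)
  also have "\<dots> = 0" by (rule integral_zero)
  finally have "(\<integral>\<omega>. g (W \<omega>, Z \<omega>) \<partial>M) = 0" .
  then show "(\<integral>\<omega>. B \<omega> \<bullet> (Gy (X \<omega>) (Y \<omega>) (Z \<omega>) - gfy (X \<omega>) (Y \<omega>)) \<partial>M) = 0"
    by (simp only: eqg)
qed

end

locale sreda_main = sreda_full F Gx Gy gfx gfy D L \<sigma> M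
  for F :: "'a::euclidean_space \<Rightarrow> 'b::euclidean_space \<Rightarrow> 'xi \<Rightarrow> real"
    and Gx :: "'a \<Rightarrow> 'b \<Rightarrow> 'xi \<Rightarrow> 'a" and Gy :: "'a \<Rightarrow> 'b \<Rightarrow> 'xi \<Rightarrow> 'b"
    and gfx :: "'a \<Rightarrow> 'b \<Rightarrow> 'a" and gfy :: "'a \<Rightarrow> 'b \<Rightarrow> 'b"
    and D :: "'xi measure" and L \<sigma> :: real and M :: "'w measure" +
  fixes lam :: real and S2 m :: nat
    and X0 :: "'w \<Rightarrow> 'a \<times> 'b \<times> 'a \<times> 'b \<times> 'a"
    and \<xi> :: "nat \<Rightarrow> nat \<Rightarrow> 'w \<Rightarrow> 'xi"
  assumes S2_pos: "S2 \<ge> 1"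
    and X0_meas: "X0 \<in> borel_measurable M"
    and X0_sq: "integrable M (\<lambda>\<omega>. norm (X0 \<omega>)^2)"
    and \<xi>_meas: "\<And>j i. \<xi> j i \<in> measurable M D"
    and \<xi>_distr: "\<And>j i. distr M D (\<xi> j i) = D"
    and \<xi>_indep: "indep_vars (\<lambda>_. D) (\<lambda>(j, i). \<xi> j i) ({..Suc m} \<times> {..<S2})"
    and X0_indep: "indep_set
                     (sigma_sets (space M) {X0 -` A \<inter> space M | A. A \<in> sets borel})
                     (sigma_sets (space M) {(\<lambda>\<omega>. \<lambda>p\<in>{..Suc m} \<times> {..<S2}. \<xi> (fst p) (snd p) \<omega>) -` A \<inter> space M
                        | A. A \<in> sets (\<Pi>\<^sub>M p\<in>{..Suc m} \<times> {..<S2}. D)})"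
begin

definition "Kset j = {..<j} \<times> {..<S2}"
definition "Xi j = (\<lambda>\<omega>. \<lambda>p\<in>Kset j. \<xi> (fst p) (snd p) \<omega>)"
definition "Gen j = {X0 -` A \<inter> Xi j -` B \<inter> space M | A B. A \<in> sets borel \<and> B \<in> sets (PiM (Kset j) (\<lambda>_. D))}"
definition "NN j = sigma (space M) (Gen j)"

lemma Xi_meas: "Xi j \<in> measurable M (PiM (Kset j) (\<lambda>_. D))"
  unfolding Xi_def by (intro measurable_restrict \<xi>_meas)

lemma Gen_events: "Gen j \<subseteq> events"
proof
  fix G assume "G \<in> Gen j"
  then obtain A B where A: "A \<in> sets borel" and B: "B \<in> sets (PiM (Kset j) (\<lambda>_. D))"
    and G: "G = X0 -` A \<inter> Xi j -` B \<inter> space M" unfolding Gen_def by blast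
  have "G = (X0 -` A \<inter> space M) \<inter> (Xi j -` B \<inter> space M)" using G by auto
  also have "\<dots> \<in> events"
    using measurable_sets[OF X0_meas A] measurable_sets[OF Xi_meas B] by (rule sets.Int)
  finally show "G \<in> events" .
qed

lemma Gen_Pow: "Gen j \<subseteq> Pow (space M)"
  unfolding Gen_def by auto

lemma sets_NN: "sets (NN j) = sigma_sets (space M) (Gen j)"
  unfolding NN_def using Gen_Pow by (rule sets_measure_of)

lemma space_NN: "space (NN j) = space M"
  unfolding NN_def using Gen_Pow by (rule space_measure_of)

lemma subalg_NN: "subalgebra M (NN j)"
proof -
  have "sigma_sets (space M) (Gen j) \<subseteq> events"
    using Gen_events by (intro sets.sigma_sets_subset) auto
  then show ?thesis unfolding subalgebra_def using sets_NN space_NN by auto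
qed

lemma meas_from_NN: "f \<in> measurable (NN j) K \<Longrightarrow> f \<in> measurable M K"
  by (rule measurable_from_subalg[OF subalg_NN])

lemma Gen_memI: "A \<in> sets borel \<Longrightarrow> B \<in> sets (PiM (Kset j) (\<lambda>_. D)) \<Longrightarrow> X0 -` A \<inter> Xi j -` B \<inter> space M \<in> Gen j"
  unfolding Gen_def by blast

lemma Xi_space: "\<omega> \<in> space M \<Longrightarrow> Xi j \<omega> \<in> space (PiM (Kset j) (\<lambda>_. D))"
  using measurable_space[OF Xi_meas] by blast

lemma X0_NN: "X0 \<in> borel_measurable (NN j)"
proof (rule measurableI)
  fix A :: "('a \<times> 'b \<times> 'a \<times> 'b \<times> 'a) set" assume A: "A \<in> sets borel"
  have "X0 -` A \<inter> space M = X0 -` A \<inter> Xi j -` space (PiM (Kset j) (\<lambda>_. D)) \<inter> space M"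
    using Xi_space by blast
  also have "\<dots> \<in> Gen j" using A by (intro Gen_memI sets.top)
  finally show "X0 -` A \<inter> space (NN j) \<in> sets (NN j)"
    unfolding sets_NN space_NN by (rule sigma_sets.Basic)
qed simp

lemma xi_NN: assumes "a < j" "b < S2" shows "\<xi> a b \<in> measurable (NN j) D"
proof (rule measurableI)
  fix x assume "x \<in> space (NN j)" then show "\<xi> a b x \<in> space D"
    using measurable_space[OF \<xi>_meas] space_NN by auto
next
  fix C assume C: "C \<in> sets D"
  have ab: "(a, b) \<in> Kset j" using assms by (simp add: Kset_def)
  define B where "B = (\<lambda>f. f (a, b)) -` C \<inter> space (PiM (Kset j) (\<lambda>_. D))"
  have B: "B \<in> sets (PiM (Kset j) (\<lambda>_. D))"
    unfolding B_def using measurable_sets[OF measurable_component_singleton[OF ab] C] by simp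
  have "\<xi> a b -` C \<inter> space M = X0 -` UNIV \<inter> Xi j -` B \<inter> space M"
  proof (intro set_eqI iffI)
    fix \<omega> assume "\<omega> \<in> \<xi> a b -` C \<inter> space M"
    then show "\<omega> \<in> X0 -` UNIV \<inter> Xi j -` B \<inter> space M"
      using Xi_space[of \<omega>] ab unfolding B_def by (simp add: Xi_def)
  next
    fix \<omega> assume "\<omega> \<in> X0 -` UNIV \<inter> Xi j -` B \<inter> space M"
    then show "\<omega> \<in> \<xi> a b -` C \<inter> space M"
      using ab unfolding B_def by (simp add: Xi_def)
  qed
  also have "\<dots> \<in> Gen j" using B by (intro Gen_memI) simp_all
  finally show "\<xi> a b -` C \<inter> space (NN j) \<in> sets (NN j)"
    unfolding sets_NN space_NN by (rule sigma_sets.Basic)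
qed

end

context sreda_main begin

lemma indep_core:
  assumes j: "j \<le> Suc m" and i: "i < S2" and A: "A \<in> sets borel"
    and B: "B \<in> sets (PiM (Kset j) (\<lambda>_. D))" and C: "C \<in> sets D"
  shows "prob ((X0 -` A \<inter> Xi j -` B \<inter> space M) \<inter> (\<xi> j i -` C \<inter> space M))
       = prob (X0 -` A \<inter> Xi j -` B \<inter> space M) * prob (\<xi> j i -` C \<inter> space M)"
proof -
  define I where "I = {..Suc m} \<times> {..<S2}"
  define \<Phi> where "\<Phi> = (\<lambda>\<omega>. \<lambda>p\<in>I. \<xi> (fst p) (snd p) \<omega>)"
  have KI: "Kset j \<subseteq> I" using j by (auto simp: Kset_def I_def)
  have jiI: "(j, i) \<in> I" using j i by (simp add: I_def)
  have jiK: "(j, i) \<notin> Kset j" by (simp add: Kset_def)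
  have \<Phi>m: "\<Phi> \<in> measurable M (PiM I (\<lambda>_. D))" unfolding \<Phi>_def by (intro measurable_restrict \<xi>_meas)
  define R1 where "R1 = (\<lambda>f. restrict f (Kset j)) -` B \<inter> space (PiM I (\<lambda>_. D))"
  define R2 where "R2 = R1 \<inter> ((\<lambda>f. f (j, i)) -` C \<inter> space (PiM I (\<lambda>_. D)))"
  have R1s: "R1 \<in> sets (PiM I (\<lambda>_. D))"
    unfolding R1_def by (rule measurable_sets[OF measurable_restrict_subset[OF KI] B])
  have R2s: "R2 \<in> sets (PiM I (\<lambda>_. D))"
    unfolding R2_def using R1s measurable_sets[OF measurable_component_singleton[OF jiI] C] by (rule sets.Int)
  have res\<Phi>: "restrict (\<Phi> \<omega>) (Kset j) = Xi j \<omega>" for \<omega>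
  proof (rule ext)
    fix p show "restrict (\<Phi> \<omega>) (Kset j) p = Xi j \<omega> p"
      using KI unfolding \<Phi>_def Xi_def by (cases "p \<in> Kset j") auto
  qed
  have \<Phi>ji: "\<Phi> \<omega> (j, i) = \<xi> j i \<omega>" for \<omega> using jiI by (simp add: \<Phi>_def)
  have \<Phi>sp: "\<Phi> \<omega> \<in> space (PiM I (\<lambda>_. D))" if "\<omega> \<in> space M" for \<omega>
    using measurable_space[OF \<Phi>m] that by blast
  have e1: "\<Phi> -` R1 \<inter> space M = Xi j -` B \<inter> space M"
  proof (intro set_eqI)
    fix x show "x \<in> \<Phi> -` R1 \<inter> space M \<longleftrightarrow> x \<in> Xi j -` B \<inter> space M"
      using \<Phi>sp[of x] res\<Phi>[of x] unfolding R1_def vimage_def Int_iff mem_Collect_eq by metis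
  qed
  have e2: "\<Phi> -` R2 \<inter> space M = Xi j -` B \<inter> \<xi> j i -` C \<inter> space M"
  proof (intro set_eqI)
    fix x show "x \<in> \<Phi> -` R2 \<inter> space M \<longleftrightarrow> x \<in> Xi j -` B \<inter> \<xi> j i -` C \<inter> space M"
      using \<Phi>sp[of x] res\<Phi>[of x] \<Phi>ji[of x] unfolding R2_def R1_def vimage_def Int_iff mem_Collect_eq by metis
  qed
  have X0ind: "prob ((X0 -` A \<inter> space M) \<inter> (\<Phi> -` R \<inter> space M)) = prob (X0 -` A \<inter> space M) * prob (\<Phi> -` R \<inter> space M)"
    if R: "R \<in> sets (PiM I (\<lambda>_. D))" for R
  proof (rule indep_setD[OF X0_indep])
    show "X0 -` A \<inter> space M \<in> sigma_sets (space M) {X0 -` A \<inter> space M |A. A \<in> sets borel}"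
      using A by (intro sigma_sets.Basic) blast
    show "\<Phi> -` R \<inter> space M \<in> sigma_sets (space M) {(\<lambda>\<omega>. \<lambda>p\<in>{..Suc m} \<times> {..<S2}. \<xi> (fst p) (snd p) \<omega>) -` A \<inter> space M
                        | A. A \<in> sets (\<Pi>\<^sub>M p\<in>{..Suc m} \<times> {..<S2}. D)}"
      using R unfolding \<Phi>_def I_def by (intro sigma_sets.Basic) blast
  qed
  have \<xi>ind: "prob (Xi j -` B \<inter> \<xi> j i -` C \<inter> space M) = prob (Xi j -` B \<inter> space M) * prob (\<xi> j i -` C \<inter> space M)"
  proof -
    have iv: "indep_var (PiM (Kset j) (\<lambda>_. D)) (\<lambda>\<omega>. restrict (\<lambda>p. (\<lambda>(j, i). \<xi> j i) p \<omega>) (Kset j))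
        (PiM {(j, i)} (\<lambda>_. D)) (\<lambda>\<omega>. restrict (\<lambda>p. (\<lambda>(j, i). \<xi> j i) p \<omega>) {(j, i)})"
      using KI jiI jiK unfolding I_def by (intro indep_var_restrict[OF \<xi>_indep]) auto
    have cp: "(\<lambda>(j, i). \<xi> j i) = (\<lambda>p. \<xi> (fst p) (snd p))" by (simp add: fun_eq_iff split_beta)
    define Y where "Y = (\<lambda>\<omega>. restrict (\<lambda>p. \<xi> (fst p) (snd p) \<omega>) {(j, i)})"
    from iv have iv': "indep_var (PiM (Kset j) (\<lambda>_. D)) (Xi j) (PiM {(j, i)} (\<lambda>_. D)) Y"
      unfolding cp Xi_def Y_def .
    define Cs where "Cs = (\<lambda>f. f (j, i)) -` C \<inter> space (PiM {(j, i)} (\<lambda>_. D))"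
    have Cs: "Cs \<in> sets (PiM {(j, i)} (\<lambda>_. D))"
      unfolding Cs_def by (rule measurable_sets[OF measurable_component_singleton[of "(j, i)" "{(j, i)}" "\<lambda>_. D"] C]) simp
    have Ym: "Y \<in> measurable M (PiM {(j, i)} (\<lambda>_. D))" unfolding Y_def by (intro measurable_restrict \<xi>_meas)
    have Ysp: "Y \<omega> \<in> space (PiM {(j, i)} (\<lambda>_. D))" if "\<omega> \<in> space M" for \<omega>
      using measurable_space[OF Ym] that by blast
    have "prob ((\<lambda>\<omega>. (Xi j \<omega>, Y \<omega>)) -` (B \<times> Cs) \<inter> space M) = prob (Xi j -` B \<inter> space M) * prob (Y -` Cs \<inter> space M)"
      by (rule indep_varD[OF iv' B Cs])
    moreover have "Y -` Cs \<inter> space M = \<xi> j i -` C \<inter> space M"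
      using Ysp unfolding Cs_def by (auto simp: Y_def)
    moreover have "(\<lambda>\<omega>. (Xi j \<omega>, Y \<omega>)) -` (B \<times> Cs) \<inter> space M = Xi j -` B \<inter> \<xi> j i -` C \<inter> space M"
      using Ysp unfolding Cs_def by (auto simp: Y_def)
    ultimately show ?thesis by simp
  qed
  have s2: "(X0 -` A \<inter> Xi j -` B \<inter> space M) \<inter> (\<xi> j i -` C \<inter> space M) = (X0 -` A \<inter> space M) \<inter> (\<Phi> -` R2 \<inter> space M)"
    unfolding e2 by blast
  have s1: "X0 -` A \<inter> Xi j -` B \<inter> space M = (X0 -` A \<inter> space M) \<inter> (\<Phi> -` R1 \<inter> space M)"
    unfolding e1 by blast
  have p2: "prob ((X0 -` A \<inter> Xi j -` B \<inter> space M) \<inter> (\<xi> j i -` C \<inter> space M))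
      = prob (X0 -` A \<inter> space M) * (prob (Xi j -` B \<inter> space M) * prob (\<xi> j i -` C \<inter> space M))"
  proof -
    have "prob ((X0 -` A \<inter> Xi j -` B \<inter> space M) \<inter> (\<xi> j i -` C \<inter> space M))
        = prob ((X0 -` A \<inter> space M) \<inter> (\<Phi> -` R2 \<inter> space M))" by (simp only: s2)
    also have "\<dots> = prob (X0 -` A \<inter> space M) * prob (\<Phi> -` R2 \<inter> space M)" by (rule X0ind[OF R2s])
    also have "\<dots> = prob (X0 -` A \<inter> space M) * (prob (Xi j -` B \<inter> space M) * prob (\<xi> j i -` C \<inter> space M))"
      by (simp only: e2 \<xi>ind)
    finally show ?thesis .
  qed
  have p1: "prob (X0 -` A \<inter> Xi j -` B \<inter> space M) = prob (X0 -` A \<inter> space M) * prob (Xi j -` B \<inter> space M)"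
  proof -
    have "prob (X0 -` A \<inter> Xi j -` B \<inter> space M) = prob ((X0 -` A \<inter> space M) \<inter> (\<Phi> -` R1 \<inter> space M))"
      by (simp only: s1)
    also have "\<dots> = prob (X0 -` A \<inter> space M) * prob (\<Phi> -` R1 \<inter> space M)" by (rule X0ind[OF R1s])
    also have "\<dots> = prob (X0 -` A \<inter> space M) * prob (Xi j -` B \<inter> space M)" by (simp only: e1)
    finally show ?thesis .
  qed
  show ?thesis unfolding p1 p2 by (simp only: mult.assoc)
qed

end

context sreda_main begin

lemma indep_NN:
  assumes j: "j \<le> Suc m" and i: "i < S2" and E: "E \<in> sets (NN j)" and C: "C \<in> sets D"
  shows "prob (E \<inter> (\<xi> j i -` C \<inter> space M)) = prob E * prob (\<xi> j i -` C \<inter> space M)"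
proof -
  define Zp where "Zp = {\<xi> j i -` C \<inter> space M | C. C \<in> sets D}"
  have ig: "indep_set (Gen j) Zp"
    unfolding indep_sets2_eq
  proof (intro conjI ballI)
    show "Gen j \<subseteq> events" by (rule Gen_events)
    show "Zp \<subseteq> events" unfolding Zp_def using \<xi>_meas by (auto intro: measurable_sets)
    fix a b assume a: "a \<in> Gen j" and b: "b \<in> Zp"
    obtain A B where A: "A \<in> sets borel" and B: "B \<in> sets (PiM (Kset j) (\<lambda>_. D))"
      and aeq: "a = X0 -` A \<inter> Xi j -` B \<inter> space M" using a unfolding Gen_def by blast
    obtain C' where C': "C' \<in> sets D" and beq: "b = \<xi> j i -` C' \<inter> space M"
      using b unfolding Zp_def by blast
    show "prob (a \<inter> b) = prob a * prob b"
      unfolding aeq beq by (rule indep_core[OF j i A B C'])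
  qed
  have st1: "Int_stable (Gen j)"
  proof (rule Int_stableI)
    fix a b assume a: "a \<in> Gen j" and b: "b \<in> Gen j"
    obtain A1 B1 where A1: "A1 \<in> sets borel" and B1: "B1 \<in> sets (PiM (Kset j) (\<lambda>_. D))"
      and aeq: "a = X0 -` A1 \<inter> Xi j -` B1 \<inter> space M" using a unfolding Gen_def by blast
    obtain A2 B2 where A2: "A2 \<in> sets borel" and B2: "B2 \<in> sets (PiM (Kset j) (\<lambda>_. D))"
      and beq: "b = X0 -` A2 \<inter> Xi j -` B2 \<inter> space M" using b unfolding Gen_def by blast
    have "a \<inter> b = X0 -` (A1 \<inter> A2) \<inter> Xi j -` (B1 \<inter> B2) \<inter> space M"
      unfolding aeq beq by blast
    also have "\<dots> \<in> Gen j" using A1 A2 B1 B2 by (intro Gen_memI sets.Int)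
    finally show "a \<inter> b \<in> Gen j" .
  qed
  have st2: "Int_stable Zp"
  proof (rule Int_stableI)
    fix a b assume a: "a \<in> Zp" and b: "b \<in> Zp"
    obtain C1 where C1: "C1 \<in> sets D" and aeq: "a = \<xi> j i -` C1 \<inter> space M" using a unfolding Zp_def by blast
    obtain C2 where C2: "C2 \<in> sets D" and beq: "b = \<xi> j i -` C2 \<inter> space M" using b unfolding Zp_def by blast
    have "a \<inter> b = \<xi> j i -` (C1 \<inter> C2) \<inter> space M" unfolding aeq beq by blast
    moreover have "C1 \<inter> C2 \<in> sets D" using C1 C2 by (rule sets.Int)
    ultimately show "a \<inter> b \<in> Zp" unfolding Zp_def by blast
  qed
  have isg: "indep_set (sigma_sets (space M) (Gen j)) (sigma_sets (space M) Zp)"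
    by (rule indep_set_sigma_sets[OF ig st1 st2])
  have E': "E \<in> sigma_sets (space M) (Gen j)" using E by (simp add: sets_NN)
  have C': "\<xi> j i -` C \<inter> space M \<in> sigma_sets (space M) Zp"
    unfolding Zp_def using C by (intro sigma_sets.Basic) blast
  show ?thesis by (rule indep_setD[OF isg E' C'])
qed

lemma indepZ_NN:
  fixes W :: "'w \<Rightarrow> 'c::topological_space"
  assumes j: "j \<le> Suc m" and i: "i < S2" and W: "W \<in> borel_measurable (NN j)"
  shows "indepZ M W (\<xi> j i) D"
  unfolding indepZ_def
proof (intro conjI ballI)
  show "W \<in> borel_measurable M" using meas_from_NN[OF W] .
  show "\<xi> j i \<in> measurable M D" by (rule \<xi>_meas)
  show "distr M D (\<xi> j i) = D" by (rule \<xi>_distr)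
  fix A :: "'c set" and B assume A: "A \<in> sets borel" and B: "B \<in> sets D"
  have "W -` A \<inter> space M \<in> sets (NN j)" using measurable_sets[OF W A] by (simp add: space_NN)
  then show "prob ((W -` A \<inter> space M) \<inter> (\<xi> j i -` B \<inter> space M)) = prob (W -` A \<inter> space M) * prob (\<xi> j i -` B \<inter> space M)"
    by (rule indep_NN[OF j i _ B])
qed

end

context sreda_main begin

definition "Xk \<omega> = fst (X0 \<omega>)"
definition "Yk \<omega> = fst (snd (X0 \<omega>))"
definition "Uk \<omega> = fst (snd (snd (snd (X0 \<omega>))))"
definition "X1 \<omega> = snd (snd (snd (snd (X0 \<omega>))))"
definition "Yv j \<omega> = (case X0 \<omega> of (xk, yk, vk, uk, x1) \<Rightarrow> sreda_y Gx Gy lam S2 (\<lambda>a b. \<xi> a b \<omega>) xk yk vk uk x1 j)"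
definition "Uv j \<omega> = (case X0 \<omega> of (xk, yk, vk, uk, x1) \<Rightarrow> sreda_u Gx Gy lam S2 (\<lambda>a b. \<xi> a b \<omega>) xk yk vk uk x1 j)"

lemma Yv0: "Yv 0 \<omega> = Yk \<omega>"
  by (simp add: Yv_def Yk_def split_beta sreda_y0)

lemma Uv0: "Uv 0 \<omega> = Uk \<omega> + (1 / real S2) *\<^sub>R (\<Sum>i<S2. Gy (X1 \<omega>) (Yk \<omega>) (\<xi> 0 i \<omega>) - Gy (Xk \<omega>) (Yk \<omega>) (\<xi> 0 i \<omega>))"
  by (simp add: Uv_def Uk_def X1_def Xk_def Yk_def split_beta sreda_u0)

lemma YvS: "Yv (Suc j) \<omega> = Yv j \<omega> + lam *\<^sub>R Uv j \<omega>"
  by (simp add: Yv_def Uv_def split_beta sreda_ySuc)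

lemma UvS: "Uv (Suc j) \<omega> = Uv j \<omega> + (1 / real S2) *\<^sub>R
    (\<Sum>i<S2. Gy (X1 \<omega>) (Yv (Suc j) \<omega>) (\<xi> (Suc j) i \<omega>) - Gy (X1 \<omega>) (Yv j \<omega>) (\<xi> (Suc j) i \<omega>))"
  by (simp only: Yv_def Uv_def X1_def split_beta sreda_uSuc)

lemma comp_meas:
  assumes "X0 \<in> borel_measurable N"
  shows "Xk \<in> borel_measurable N" "Yk \<in> borel_measurable N" "Uk \<in> borel_measurable N" "X1 \<in> borel_measurable N"
  unfolding Xk_def Yk_def Uk_def X1_def using assms
  by (intro borel_meas_fst borel_meas_snd; assumption?)+

lemma meas_YU:
  assumes X: "X0 \<in> borel_measurable N"
    and xi: "\<And>a b. a \<le> j \<Longrightarrow> b < S2 \<Longrightarrow> \<xi> a b \<in> measurable N D"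
  shows "Yv j \<in> borel_measurable N \<and> Uv j \<in> borel_measurable N \<and> Yv (Suc j) \<in> borel_measurable N"
  using xi
proof (induction j)
  case 0
  have y: "Yv 0 \<in> borel_measurable N" unfolding Yv0[abs_def] using comp_meas[OF X] by simp
  have u: "Uv 0 \<in> borel_measurable N"
    unfolding Uv0[abs_def] using comp_meas[OF X] 0
    by (intro borel_measurable_add borel_measurable_scaleR borel_measurable_const borel_measurable_sum
        borel_measurable_diff Gy_meas_comp) auto
  have ys: "Yv (Suc 0) \<in> borel_measurable N"
    unfolding YvS[abs_def] using y u by (intro borel_measurable_add borel_measurable_scaleR borel_measurable_const)
  show ?case using y u ys by simp
next
  case (Suc j)
  then have IH: "Yv j \<in> borel_measurable N" "Uv j \<in> borel_measurable N" "Yv (Suc j) \<in> borel_measurable N" by auto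
  have u: "Uv (Suc j) \<in> borel_measurable N"
    unfolding UvS[abs_def] using comp_meas[OF X] IH Suc.prems
    by (intro borel_measurable_add borel_measurable_scaleR borel_measurable_const borel_measurable_sum
        borel_measurable_diff Gy_meas_comp) auto
  have ys: "Yv (Suc (Suc j)) \<in> borel_measurable N"
    unfolding YvS[abs_def, of "Suc j"] using IH u by (intro borel_measurable_add borel_measurable_scaleR borel_measurable_const)
  show ?case using IH u ys by simp
qed

end

context sreda_main begin

lemma X0_L2: "L2 M X0" using X0_meas X0_sq by (simp add: L2_def)

lemma comp_L2: "L2 M Xk" "L2 M Yk" "L2 M Uk" "L2 M X1"
  unfolding Xk_def Yk_def Uk_def X1_def using X0_L2
  by (intro L2_fst L2_snd; assumption?)+

lemma meas_NN:
  "Yv j \<in> borel_measurable (NN (Suc j)) \<and> Uv j \<in> borel_measurable (NN (Suc j)) \<and> Yv (Suc j) \<in> borel_measurable (NN (Suc j))"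
  by (rule meas_YU[OF X0_NN]) (rule xi_NN, auto)

lemma meas_M: "Yv j \<in> borel_measurable M" "Uv j \<in> borel_measurable M"
  using meas_YU[OF X0_meas, of j] \<xi>_meas by auto

lemma L2_YU: "j \<le> Suc m \<Longrightarrow> L2 M (Yv j) \<and> L2 M (Uv j)"
proof (induction j)
  case 0
  have y: "L2 M (Yv 0)" unfolding Yv0[abs_def] using comp_L2 by simp
  have W: "(\<lambda>\<omega>. (X1 \<omega>, Yk \<omega>, Xk \<omega>, Yk \<omega>)) \<in> borel_measurable (NN 0)"
    using comp_meas[OF X0_NN] by (intro borel_measurable_Pair) auto
  have t: "L2 M (\<lambda>\<omega>. Gy (X1 \<omega>) (Yk \<omega>) (\<xi> 0 i \<omega>) - Gy (Xk \<omega>) (Yk \<omega>) (\<xi> 0 i \<omega>))" if "i < S2" for i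
    using that by (intro K1 indepZ_NN[OF _ _ W] comp_L2) auto
  have u: "L2 M (Uv 0)" unfolding Uv0[abs_def]
    by (intro L2_add L2_scaleR L2_sum comp_L2 t) auto
  show ?case using y u by simp
next
  case (Suc j)
  then have IH: "L2 M (Yv j)" "L2 M (Uv j)" by auto
  have y: "L2 M (Yv (Suc j))" unfolding YvS[abs_def] using IH by (intro L2_add L2_scaleR)
  have W: "(\<lambda>\<omega>. (X1 \<omega>, Yv (Suc j) \<omega>, X1 \<omega>, Yv j \<omega>)) \<in> borel_measurable (NN (Suc j))"
    using comp_meas[OF X0_NN] meas_NN[of j] by (intro borel_measurable_Pair) auto
  have t: "L2 M (\<lambda>\<omega>. Gy (X1 \<omega>) (Yv (Suc j) \<omega>) (\<xi> (Suc j) i \<omega>) - Gy (X1 \<omega>) (Yv j \<omega>) (\<xi> (Suc j) i \<omega>))"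
    if "i < S2" for i
    using that Suc.prems by (intro K1 indepZ_NN[OF _ _ W] comp_L2 IH y) auto
  have u: "L2 M (Uv (Suc j))" unfolding UvS[abs_def]
    by (intro L2_add L2_scaleR L2_sum IH t) auto
  show ?case using y u by simp
qed

end

lemma norm_sq_identity:
  fixes e a d :: "'v::real_inner"
  shows "(norm (e + a - d))^2 = (norm e)^2 + (norm a)^2 - (norm d)^2 + 2 * ((e - d) \<bullet> (a - d))"
  by (simp add: power2_norm_eq_inner inner_add_left inner_add_right inner_diff_left inner_diff_right
      inner_commute algebra_simps)

context sreda_main begin

definition "ee j \<omega> = Uv j \<omega> - gfy (X1 \<omega>) (Yv j \<omega>)"

lemma fm: "finite_measure M" by (rule finite_measure_axioms)

lemma L2_G: "j \<le> Suc m \<Longrightarrow> L2 M (\<lambda>\<omega>. gfy (X1 \<omega>) (Yv j \<omega>))"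
  using L2_YU comp_L2 by (intro gfy_L2[OF fm]) auto

lemma sum_rearr:
  fixes a b :: "nat \<Rightarrow> 'v::ab_group_add"
  shows "(\<Sum>i\<in>I. (a i - c) - (b i - d)) = (\<Sum>i\<in>I. a i - b i) - (\<Sum>i\<in>I. c - d)"
  by (subst sum_subtractf[symmetric]) (rule sum.cong, auto simp: algebra_simps)

lemma step:
  assumes t: "Suc t \<le> Suc m"
  shows "(\<integral>\<omega>. (norm (ee (Suc t) \<omega>))^2 \<partial>M) = (\<integral>\<omega>. (norm (ee t \<omega>))^2 \<partial>M)
     + (\<integral>\<omega>. (norm (Uv (Suc t) \<omega> - Uv t \<omega>))^2 \<partial>M)
     - (\<integral>\<omega>. (norm (gfy (X1 \<omega>) (Yv (Suc t) \<omega>) - gfy (X1 \<omega>) (Yv t \<omega>)))^2 \<partial>M)"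
proof -
  define \<Delta> where "\<Delta> = (\<lambda>\<omega>. Uv (Suc t) \<omega> - Uv t \<omega>)"
  define \<delta> where "\<delta> = (\<lambda>\<omega>. gfy (X1 \<omega>) (Yv (Suc t) \<omega>) - gfy (X1 \<omega>) (Yv t \<omega>))"
  define B where "B = (\<lambda>\<omega>. ee t \<omega> - \<delta> \<omega>)"
  have tm: "t \<le> Suc m" using t by simp
  have LU: "L2 M (Uv t)" "L2 M (Uv (Suc t))" using L2_YU tm t by auto
  have LG: "L2 M (\<lambda>\<omega>. gfy (X1 \<omega>) (Yv t \<omega>))" "L2 M (\<lambda>\<omega>. gfy (X1 \<omega>) (Yv (Suc t) \<omega>))"
    using L2_G tm t by auto
  have L\<Delta>: "L2 M \<Delta>" unfolding \<Delta>_def using LU by (intro L2_diff)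
  have L\<delta>: "L2 M \<delta>" unfolding \<delta>_def using LG by (intro L2_diff)
  have Le: "L2 M (ee t)" unfolding ee_def[abs_def] using LU LG by (intro L2_diff)
  have LB: "L2 M B" unfolding B_def using Le L\<delta> by (intro L2_diff)
  have pw: "(norm (ee (Suc t) \<omega>))^2 = (norm (ee t \<omega>))^2 + (norm (\<Delta> \<omega>))^2 - (norm (\<delta> \<omega>))^2
      + 2 * (B \<omega> \<bullet> (\<Delta> \<omega> - \<delta> \<omega>))" for \<omega>
  proof -
    have "ee (Suc t) \<omega> = ee t \<omega> + \<Delta> \<omega> - \<delta> \<omega>" by (simp add: ee_def \<Delta>_def \<delta>_def algebra_simps)
    then show ?thesis using norm_sq_identity[of "ee t \<omega>" "\<Delta> \<omega>" "\<delta> \<omega>"] by (simp add: B_def)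
  qed
  define T where "T = (\<lambda>i \<omega>. B \<omega> \<bullet> (Gy (X1 \<omega>) (Yv (Suc t) \<omega>) (\<xi> (Suc t) i \<omega>) - gfy (X1 \<omega>) (Yv (Suc t) \<omega>))
      - B \<omega> \<bullet> (Gy (X1 \<omega>) (Yv t \<omega>) (\<xi> (Suc t) i \<omega>) - gfy (X1 \<omega>) (Yv t \<omega>)))"
  have Bexp: "B \<omega> \<bullet> (\<Delta> \<omega> - \<delta> \<omega>) = (1 / real S2) * (\<Sum>i<S2. T i \<omega>)" for \<omega>
  proof -
    have S: "real S2 \<noteq> 0" using S2_pos by simp
    have dd: "\<delta> \<omega> = (1 / real S2) *\<^sub>R (\<Sum>i<S2. gfy (X1 \<omega>) (Yv (Suc t) \<omega>) - gfy (X1 \<omega>) (Yv t \<omega>))"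
      using S by (simp add: \<delta>_def sum_constant_scaleR)
    have DD: "\<Delta> \<omega> = (1 / real S2) *\<^sub>R (\<Sum>i<S2. Gy (X1 \<omega>) (Yv (Suc t) \<omega>) (\<xi> (Suc t) i \<omega>) - Gy (X1 \<omega>) (Yv t \<omega>) (\<xi> (Suc t) i \<omega>))"
      by (simp add: \<Delta>_def UvS)
    have "\<Delta> \<omega> - \<delta> \<omega> = (1 / real S2) *\<^sub>R (\<Sum>i<S2. (Gy (X1 \<omega>) (Yv (Suc t) \<omega>) (\<xi> (Suc t) i \<omega>) - gfy (X1 \<omega>) (Yv (Suc t) \<omega>))
        - (Gy (X1 \<omega>) (Yv t \<omega>) (\<xi> (Suc t) i \<omega>) - gfy (X1 \<omega>) (Yv t \<omega>)))"
      unfolding DD dd sum_rearr scaleR_diff_right ..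
    then show ?thesis
      by (simp add: T_def inner_sum_right inner_diff_right sum_subtractf)
  qed
  have WB: "B \<in> borel_measurable (NN (Suc t))"
    unfolding B_def ee_def \<delta>_def using comp_meas[OF X0_NN] meas_NN[of t]
    by (intro borel_measurable_diff gfy_meas_comp) auto
  have W1: "(\<lambda>\<omega>. (B \<omega>, X1 \<omega>, Yv (Suc t) \<omega>)) \<in> borel_measurable (NN (Suc t))"
    using WB comp_meas[OF X0_NN] meas_NN[of t] by (intro borel_measurable_Pair) auto
  have W2: "(\<lambda>\<omega>. (B \<omega>, X1 \<omega>, Yv t \<omega>)) \<in> borel_measurable (NN (Suc t))"
    using WB comp_meas[OF X0_NN] meas_NN[of t] by (intro borel_measurable_Pair) auto
  have KT: "integrable M (T i) \<and> integral\<^sup>L M (T i) = 0" if i: "i < S2" for i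
  proof -
    note k1 = K2[OF indepZ_NN[OF t i W1] LB comp_meas(4)[OF X0_meas] meas_M(1)]
    note k2 = K2[OF indepZ_NN[OF t i W2] LB comp_meas(4)[OF X0_meas] meas_M(1)]
    have "integrable M (T i)" unfolding T_def using k1(1) k2(1) by (rule Bochner_Integration.integrable_diff)
    moreover have "integral\<^sup>L M (T i) = 0" unfolding T_def
      using k1 k2 by (simp add: Bochner_Integration.integral_diff)
    ultimately show ?thesis by simp
  qed
  have intBD: "(\<integral>\<omega>. B \<omega> \<bullet> (\<Delta> \<omega> - \<delta> \<omega>) \<partial>M) = 0"
  proof -
    have "(\<integral>\<omega>. B \<omega> \<bullet> (\<Delta> \<omega> - \<delta> \<omega>) \<partial>M) = (\<integral>\<omega>. (1 / real S2) * (\<Sum>i<S2. T i \<omega>) \<partial>M)"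
      by (simp only: Bexp)
    also have "\<dots> = (1 / real S2) * (\<integral>\<omega>. (\<Sum>i<S2. T i \<omega>) \<partial>M)" by (rule integral_mult_right_zero)
    also have "(\<integral>\<omega>. (\<Sum>i<S2. T i \<omega>) \<partial>M) = (\<Sum>i<S2. integral\<^sup>L M (T i))"
      using KT by (intro Bochner_Integration.integral_sum) auto
    also have "\<dots> = 0" using KT by simp
    finally show ?thesis by simp
  qed
  have i1: "integrable M (\<lambda>\<omega>. (norm (ee t \<omega>))^2)" using Le by (rule L2_sq)
  have i2: "integrable M (\<lambda>\<omega>. (norm (\<Delta> \<omega>))^2)" using L\<Delta> by (rule L2_sq)
  have i3: "integrable M (\<lambda>\<omega>. (norm (\<delta> \<omega>))^2)" using L\<delta> by (rule L2_sq)
  have i4: "integrable M (\<lambda>\<omega>. B \<omega> \<bullet> (\<Delta> \<omega> - \<delta> \<omega>))" using LB L2_diff[OF L\<Delta> L\<delta>] by (rule L2_int_inner)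
  have "(\<integral>\<omega>. (norm (ee (Suc t) \<omega>))^2 \<partial>M)
      = (\<integral>\<omega>. (norm (ee t \<omega>))^2 + (norm (\<Delta> \<omega>))^2 - (norm (\<delta> \<omega>))^2 + 2 * (B \<omega> \<bullet> (\<Delta> \<omega> - \<delta> \<omega>)) \<partial>M)"
    by (simp only: pw)
  also have "\<dots> = (\<integral>\<omega>. (norm (ee t \<omega>))^2 \<partial>M) + (\<integral>\<omega>. (norm (\<Delta> \<omega>))^2 \<partial>M) - (\<integral>\<omega>. (norm (\<delta> \<omega>))^2 \<partial>M)
      + 2 * (\<integral>\<omega>. B \<omega> \<bullet> (\<Delta> \<omega> - \<delta> \<omega>) \<partial>M)"
    using i1 i2 i3 i4 by simp
  finally show ?thesis using intBD by (simp add: \<Delta>_def \<delta>_def)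
qed

end

context sreda_main begin

lemma main_ind:
  "t \<le> Suc m \<Longrightarrow> (\<integral>\<omega>. (norm (ee t \<omega>))^2 \<partial>M) = (\<integral>\<omega>. (norm (ee 0 \<omega>))^2 \<partial>M)
     - (\<Sum>j\<in>{1..t}. \<integral>\<omega>. (norm (gfy (X1 \<omega>) (Yv j \<omega>) - gfy (X1 \<omega>) (Yv (j - 1) \<omega>)))^2 \<partial>M)
     + (\<Sum>j\<in>{1..t}. \<integral>\<omega>. (norm (Uv j \<omega> - Uv (j - 1) \<omega>))^2 \<partial>M)"
proof (induction t)
  case 0 then show ?case by simp
next
  case (Suc t)
  then have IH: "(\<integral>\<omega>. (norm (ee t \<omega>))^2 \<partial>M) = (\<integral>\<omega>. (norm (ee 0 \<omega>))^2 \<partial>M)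
     - (\<Sum>j\<in>{1..t}. \<integral>\<omega>. (norm (gfy (X1 \<omega>) (Yv j \<omega>) - gfy (X1 \<omega>) (Yv (j - 1) \<omega>)))^2 \<partial>M)
     + (\<Sum>j\<in>{1..t}. \<integral>\<omega>. (norm (Uv j \<omega> - Uv (j - 1) \<omega>))^2 \<partial>M)" by simp
  have ins: "{1..Suc t} = insert (Suc t) {1..t}" by auto
  show ?case
    unfolding ins using step[OF Suc.prems] IH by simp
qed

lemma final:
  assumes t_range: "1 \<le> t" "t \<le> Suc m"
  shows
    "let xk1 = (\<lambda>\<omega>. snd (snd (snd (snd (X0 \<omega>)))));
         Y = (\<lambda>j \<omega>. case X0 \<omega> of (xk, yk, vk, uk, x1) \<Rightarrow>
                sreda_y Gx Gy lam S2 (\<lambda>a b. \<xi> a b \<omega>) xk yk vk uk x1 j);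
         U = (\<lambda>j \<omega>. case X0 \<omega> of (xk, yk, vk, uk, x1) \<Rightarrow>
                sreda_u Gx Gy lam S2 (\<lambda>a b. \<xi> a b \<omega>) xk yk vk uk x1 j);
         grad_g = (\<lambda>\<omega> y. - gfy (xk1 \<omega>) y);
         uhat = (\<lambda>j \<omega>. - U j \<omega>)
     in (\<integral>\<omega>. norm (grad_g \<omega> (Y t \<omega>) - uhat t \<omega>)^2 \<partial>M)
        = (\<integral>\<omega>. norm (grad_g \<omega> (Y 0 \<omega>) - uhat 0 \<omega>)^2 \<partial>M)
          - (\<Sum>j\<in>{1..t}. \<integral>\<omega>. norm (grad_g \<omega> (Y j \<omega>) - grad_g \<omega> (Y (j - 1) \<omega>))^2 \<partial>M)
          + (\<Sum>j\<in>{1..t}. \<integral>\<omega>. norm (uhat j \<omega> - uhat (j - 1) \<omega>)^2 \<partial>M)"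
proof -
  have n1: "norm (- gfy (X1 \<omega>) (Yv j \<omega>) - - Uv j \<omega>) = norm (ee j \<omega>)" for j \<omega>
    by (simp add: ee_def)
  have n2: "norm (- gfy (X1 \<omega>) (Yv j \<omega>) - - gfy (X1 \<omega>) (Yv k \<omega>)) = norm (gfy (X1 \<omega>) (Yv j \<omega>) - gfy (X1 \<omega>) (Yv k \<omega>))" for j k \<omega>
    by (simp add: norm_minus_commute)
  have n3: "norm (- Uv j \<omega> - - Uv k \<omega>) = norm (Uv j \<omega> - Uv k \<omega>)" for j k \<omega>
    by (simp add: norm_minus_commute)
  show ?thesis
    unfolding Let_def
    apply (simp only: Yv_def[symmetric] Uv_def[symmetric] X1_def[symmetric])
    apply (simp only: n1 n2 n3)
    by (rule main_ind[OF t_range(2)])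
qed

end

theorem lemma10:
  fixes F :: "'a::euclidean_space \<Rightarrow> 'b::euclidean_space \<Rightarrow> 'xi \<Rightarrow> real"
    and Gx :: "'a \<Rightarrow> 'b \<Rightarrow> 'xi \<Rightarrow> 'a" and Gy :: "'a \<Rightarrow> 'b \<Rightarrow> 'xi \<Rightarrow> 'b"
    and gfx :: "'a \<Rightarrow> 'b \<Rightarrow> 'a" and gfy :: "'a \<Rightarrow> 'b \<Rightarrow> 'b"
    and D :: "'xi measure" and M :: "'w measure"
    and L \<mu> \<sigma> lam :: real and S2 m t :: nat
    and X0 :: "'w \<Rightarrow> 'a \<times> 'b \<times> 'a \<times> 'b \<times> 'a"
    and \<xi> :: "nat \<Rightarrow> nat \<Rightarrow> 'w \<Rightarrow> 'xi"
  assumes D_prob: "prob_space D"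
    and F_int: "\<And>x y. integrable D (F x y)"
    and F_grad: "\<And>x y s. ((\<lambda>(x', y'). F x' y' s) has_derivative
                   (\<lambda>(h1, h2). Gx x y s \<bullet> h1 + Gy x y s \<bullet> h2)) (at (x, y))"
    and Gx_meas: "(\<lambda>(z, s). Gx (fst z) (snd z) s) \<in> borel_measurable (borel \<Otimes>\<^sub>M D)"
    and Gy_meas: "(\<lambda>(z, s). Gy (fst z) (snd z) s) \<in> borel_measurable (borel \<Otimes>\<^sub>M D)"
    and f_grad: "\<And>x y. ((\<lambda>(x', y'). pop_obj D F x' y') has_derivative
                   (\<lambda>(h1, h2). gfx x y \<bullet> h1 + gfy x y \<bullet> h2)) (at (x, y))"
    and A2: "\<And>x y x' y'. (\<integral>\<^sup>+ s. ennreal (norm (Gx x y s - Gx x' y' s)^2 + norm (Gy x y s - Gy x' y' s)^2) \<partial>D)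
                 \<le> ennreal (L^2 * (norm (x - x')^2 + norm (y - y')^2))"
    and A3: "\<And>x s. concave_on UNIV (\<lambda>y. F x y s)"
    and A4: "\<mu> > 0" "\<And>x. convex_on UNIV (\<lambda>y. - pop_obj D F x y - \<mu> / 2 * norm y ^ 2)"
    and bdd_below: "\<exists>c. \<forall>x. c \<le> (SUP y. pop_obj D F x y)"
    and var: "\<And>x y. (\<integral>\<^sup>+ s. ennreal (norm (Gx x y s - gfx x y)^2 + norm (Gy x y s - gfy x y)^2) \<partial>D)
                 \<le> ennreal (\<sigma>^2)"
    and lam_pos: "lam > 0" and S2_pos: "S2 \<ge> 1"
    and M_prob: "prob_space M"
    and X0_meas: "X0 \<in> borel_measurable M"
    and X0_sq: "integrable M (\<lambda>\<omega>. norm (X0 \<omega>)^2)"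
    and \<xi>_meas: "\<And>j i. \<xi> j i \<in> measurable M D"
    and \<xi>_distr: "\<And>j i. distr M D (\<xi> j i) = D"
    and \<xi>_indep: "prob_space.indep_vars M (\<lambda>_. D) (\<lambda>(j, i). \<xi> j i) ({..Suc m} \<times> {..<S2})"
    and X0_indep: "prob_space.indep_set M
                     (sigma_sets (space M) {X0 -` A \<inter> space M | A. A \<in> sets borel})
                     (sigma_sets (space M) {(\<lambda>\<omega>. \<lambda>p\<in>{..Suc m} \<times> {..<S2}. \<xi> (fst p) (snd p) \<omega>) -` A \<inter> space M
                        | A. A \<in> sets (\<Pi>\<^sub>M p\<in>{..Suc m} \<times> {..<S2}. D)})"
    and t_range: "1 \<le> t" "t \<le> Suc m"
  shows
    "let xk1 = (\<lambda>\<omega>. snd (snd (snd (snd (X0 \<omega>)))));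
         Y = (\<lambda>j \<omega>. case X0 \<omega> of (xk, yk, vk, uk, x1) \<Rightarrow>
                sreda_y Gx Gy lam S2 (\<lambda>a b. \<xi> a b \<omega>) xk yk vk uk x1 j);
         U = (\<lambda>j \<omega>. case X0 \<omega> of (xk, yk, vk, uk, x1) \<Rightarrow>
                sreda_u Gx Gy lam S2 (\<lambda>a b. \<xi> a b \<omega>) xk yk vk uk x1 j);
         grad_g = (\<lambda>\<omega> y. - gfy (xk1 \<omega>) y);
         uhat = (\<lambda>j \<omega>. - U j \<omega>)
     in (\<integral>\<omega>. norm (grad_g \<omega> (Y t \<omega>) - uhat t \<omega>)^2 \<partial>M)
        = (\<integral>\<omega>. norm (grad_g \<omega> (Y 0 \<omega>) - uhat 0 \<omega>)^2 \<partial>M)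
          - (\<Sum>j\<in>{1..t}. \<integral>\<omega>. norm (grad_g \<omega> (Y j \<omega>) - grad_g \<omega> (Y (j - 1) \<omega>))^2 \<partial>M)
          + (\<Sum>j\<in>{1..t}. \<integral>\<omega>. norm (uhat j \<omega> - uhat (j - 1) \<omega>)^2 \<partial>M)"
proof -
  interpret sreda_main F Gx Gy gfx gfy D L \<sigma> M lam S2 m X0 \<xi>
  proof (intro sreda_main.intro sreda_full.intro sreda_ctx.intro sreda_main_axioms.intro)
  qed (fact D_prob F_int F_grad Gy_meas f_grad A2 A3 var M_prob S2_pos X0_meas X0_sq \<xi>_meas \<xi>_distr \<xi>_indep X0_indep)+
  show ?thesis by (rule final[OF t_range])
qed

end
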